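(* Let $\Sigma_1\subseteq (N_1)_\mathbb{R}$ and $\Sigma_2\subseteq(N_2)_\mathbb{R}$ be Ehrhart fans. Then the product fan $\Sigma_1\times\Sigma_2$ in $(N_1\oplus N_2)_\mathbb{R}$ is Ehrhart, and its Ehrhart polynomial is given by \[ \chi_{\Sigma_1\times\Sigma_2}([f_1\times f_2])=\chi_{\Sigma_1}([f_1])\cdot\chi_{\Sigma_2}([f_2]) \] for $f_1\in\mathrm{PL}(\Sigma_1)$, $f_2\in\mathrm{PL}(\Sigma_2)$, where $(f_1\times f_2)(x_1,x_2)=f_1(x_1)+f_2(x_2)$.
   Context: A fan is unimodular if it contains the origin and for each cone the primitive ray generators $u_\rho$ extend to a $\mathbb{Z}$-basis of the lattice. For a lattice $N$ with dual $M=\mathrm{Hom}(N,\mathbb{Z})$ viewed as integral linear functions, $\mathrm{PL}(\Sigma)$ is the group of functions on $|\Sigma|$ agreeing on each cone with some element of $M$ (for unimodular $\Sigma$ every element of $\mathrm{PL}(\Sigma_1\times\Sigma_2)$ is of the form $f_1\times f_2$), $\underline{\mathrm{PL}}(\Sigma)$ its quotient by restrictions of elements of $M$, $\delta_\rho$ the Courant function ($1$ at $u_\rho$, $0$ at other ray generators), $\Sigma^\sigma$ the star fan (image in $N_\mathbb{R}/\mathrm{span}(\sigma)$, lattice $N/\mathrm{Span}_\mathbb{Z}(\sigma\cap N)$, of all faces of cones containing $\sigma$) and $[f]^\sigma$ the class of the function induced by $f-m$, $m\in M$ agreeing with $f$ on $\sigma$. A unimodular fan $\Sigma$ is Ehrhart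 (recursively on dimension) if (1) $\Sigma^\rho$ is Ehrhart for every ray $\rho$, and (2) there is $\chi_\Sigma:\underline{\mathrm{PL}}(\Sigma)\to\mathbb{Z}$ with $\chi_\Sigma(0)=1$ and $\chi_\Sigma([f])=\chi_\Sigma([f-\delta_\rho])+\chi_{\Sigma^\rho}([f]^\rho)$ for all $f\in\mathrm{PL}(\Sigma)$, $\rho\in\Sigma(1)$. Zero-dimensional fans are Ehrhart with $\chi=1$; such $\chi_\Sigma$ is unique (the Ehrhart polynomial). *)

theory Defs
  imports "HOL-Analysis.Analysis"
begin

text \<open>Lattices are modelled as subgroups N of a Euclidean space 'a that have a
  Z-basis consisting of R-linearly independent vectors; N_R is span N.\<close>

definition int_span :: "'a::real_vector set \<Rightarrow> 'a set" where
  "int_span B = {(\<Sum>b\<in>B. of_int (c b) *\<^sub>R b) | c. True}"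

definition zbasis :: "'a::euclidean_space set \<Rightarrow> 'a set \<Rightarrow> bool" where
  "zbasis N B \<longleftrightarrow> finite B \<and> independent B \<and> N = int_span B"

definition is_lattice :: "'a::euclidean_space set \<Rightarrow> bool" where
  "is_lattice N \<longleftrightarrow> (\<exists>B. zbasis N B)"

text \<open>M = Hom(N,Z), viewed as integral linear functions.\<close>
definition intlin :: "'a::euclidean_space set \<Rightarrow> ('a \<Rightarrow> real) set" where
  "intlin N = {m. linear m \<and> (\<forall>x\<in>N. m x \<in> \<int>)}"

definition pos_hull :: "'a::real_vector set \<Rightarrow> 'a set" where
  "pos_hull G = {(\<Sum>g\<in>G. c g *\<^sub>R g) | c. \<forall>g. 0 \<le> c g}"

definition rat_cone :: "'a::euclidean_space set \<Rightarrow> 'a set \<Rightarrow> bool" where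
  "rat_cone N \<sigma> \<longleftrightarrow> (\<exists>G. finite G \<and> G \<subseteq> N \<and> \<sigma> = pos_hull G)
     \<and> (\<forall>x. x \<in> \<sigma> \<and> - x \<in> \<sigma> \<longrightarrow> x = 0)"

definition is_fan :: "'a::euclidean_space set \<Rightarrow> 'a set set \<Rightarrow> bool" where
  "is_fan N S \<longleftrightarrow> finite S \<and> S \<noteq> {} \<and> (\<forall>\<sigma>\<in>S. rat_cone N \<sigma>)
     \<and> (\<forall>\<sigma>\<in>S. \<forall>\<tau>. \<tau> face_of \<sigma> \<and> \<tau> \<noteq> {} \<longrightarrow> \<tau> \<in> S)
     \<and> (\<forall>\<sigma>\<in>S. \<forall>\<tau>\<in>S. (\<sigma> \<inter> \<tau>) face_of \<sigma> \<and> (\<sigma> \<inter> \<tau>) face_of \<tau>)"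

definition rays :: "'a::euclidean_space set set \<Rightarrow> 'a set set" where
  "rays S = {\<rho>\<in>S. dim \<rho> = 1}"

definition prim_gen :: "'a::euclidean_space set \<Rightarrow> 'a set \<Rightarrow> 'a" where
  "prim_gen N \<rho> = (THE u. u \<in> \<rho> \<inter> N \<and> u \<noteq> 0 \<and>
      (\<forall>v\<in>\<rho> \<inter> N. \<exists>k::nat. v = real k *\<^sub>R u))"

definition unimodular_fan :: "'a::euclidean_space set \<Rightarrow> 'a set set \<Rightarrow> bool" where
  "unimodular_fan N S \<longleftrightarrow> is_lattice N \<and> is_fan N S \<and>
     (\<forall>\<sigma>\<in>S. \<exists>B. zbasis N B \<and> prim_gen N ` {\<rho>\<in>rays S. \<rho> \<subseteq> \<sigma>} \<subseteq> B)"

text \<open>PL(Sigma): functions agreeing on each cone with an element of M. Values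
  outside the support are irrelevant (all constructions below only look at the
  support).\<close>
definition PL :: "'a::euclidean_space set \<Rightarrow> 'a set set \<Rightarrow> ('a \<Rightarrow> real) set" where
  "PL N S = {f. \<forall>\<sigma>\<in>S. \<exists>m\<in>intlin N. \<forall>x\<in>\<sigma>. f x = m x}"

definition courant :: "'a::euclidean_space set \<Rightarrow> 'a set set \<Rightarrow> 'a set \<Rightarrow> ('a \<Rightarrow> real)" where
  "courant N S \<rho> = (SOME g. g \<in> PL N S \<and> g (prim_gen N \<rho>) = 1 \<and>
      (\<forall>\<rho>'\<in>rays S. \<rho>' \<noteq> \<rho> \<longrightarrow> g (prim_gen N \<rho>') = 0))"

text \<open>The quotient N_R / span sigma is modelled by the orthogonal complement of
  span sigma, via the orthogonal projection; the quotient lattice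
  N / Span_Z(sigma \<inter> N) is then the projection of N.\<close>
definition perp_proj :: "'a::euclidean_space set \<Rightarrow> 'a \<Rightarrow> 'a" where
  "perp_proj A x = (THE y. x - y \<in> span A \<and> (\<forall>a\<in>A. inner a y = 0))"

definition star_lattice :: "'a::euclidean_space set \<Rightarrow> 'a set \<Rightarrow> 'a set" where
  "star_lattice N \<sigma> = perp_proj \<sigma> ` N"

definition star_fan :: "'a::euclidean_space set set \<Rightarrow> 'a set \<Rightarrow> 'a set set" where
  "star_fan S \<sigma> = {perp_proj \<sigma> ` \<tau> | \<tau>. \<exists>\<tau>'\<in>S. \<sigma> \<subseteq> \<tau>' \<and> \<tau> face_of \<tau>' \<and> \<tau> \<noteq> {}}"

text \<open>[f]^sigma: the function induced on the star fan by f - m, m \<in> M agreeing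
  with f on sigma.\<close>
definition star_fun :: "'a::euclidean_space set \<Rightarrow> 'a set set \<Rightarrow> 'a set \<Rightarrow> ('a \<Rightarrow> real) \<Rightarrow> ('a \<Rightarrow> real)" where
  "star_fun N S \<sigma> f =
     (let m = (SOME m. m \<in> intlin N \<and> (\<forall>x\<in>\<sigma>. f x = m x))
      in (\<lambda>y. SOME v. \<exists>\<tau>\<in>S. \<sigma> \<subseteq> \<tau> \<and> (\<exists>x\<in>\<tau>. perp_proj \<sigma> x = y \<and> v = f x - m x)))"

text \<open>ehr_chi N S chi: S is an Ehrhart fan (w.r.t. lattice N) and chi is its
  Ehrhart polynomial, viewed as a function on PL(S) that is constant on classes
  modulo M (and independent of values off the support).\<close>
inductive ehr_chi :: "'a::euclidean_space set \<Rightarrow> 'a set set \<Rightarrow> (('a \<Rightarrow> real) \<Rightarrow> int) \<Rightarrow> bool" where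
  "\<lbrakk> unimodular_fan N S;
     \<forall>f\<in>PL N S. \<forall>g\<in>PL N S. (\<exists>m\<in>intlin N. \<forall>x\<in>\<Union>S. f x = g x + m x) \<longrightarrow> chi f = chi g;
     chi (\<lambda>x. 0) = 1;
     \<forall>\<rho>\<in>rays S. \<exists>chir. ehr_chi (star_lattice N \<rho>) (star_fan S \<rho>) chir \<and>
        (\<forall>f\<in>PL N S. chi f = chi (\<lambda>x. f x - courant N S \<rho> x) + chir (star_fun N S \<rho> f)) \<rbrakk>
   \<Longrightarrow> ehr_chi N S chi"

definition ehrhart :: "'a::euclidean_space set \<Rightarrow> 'a set set \<Rightarrow> bool" where
  "ehrhart N S \<longleftrightarrow> (\<exists>chi. ehr_chi N S chi)"

definition prod_fan :: "'a set set \<Rightarrow> 'b set set \<Rightarrow> ('a \<times> 'b) set set" where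
  "prod_fan S1 S2 = {\<sigma>1 \<times> \<sigma>2 | \<sigma>1 \<sigma>2. \<sigma>1 \<in> S1 \<and> \<sigma>2 \<in> S2}"

end

theory Submission
  imports Defs
begin

lemma pos_hullI: "x = (\<Sum>g\<in>G. c g *\<^sub>R g) \<Longrightarrow> \<forall>g. 0 \<le> c g \<Longrightarrow> x \<in> pos_hull G"
  unfolding pos_hull_def by blast

lemma int_spanI: "x = (\<Sum>b\<in>B. of_int (c b) *\<^sub>R b) \<Longrightarrow> x \<in> int_span B"
  unfolding int_span_def by blast

lemma pos_hull_0: "0 \<in> pos_hull G"
  unfolding pos_hull_def by (rule CollectI, rule exI[of _ "\<lambda>_. 0"]) simp

lemma pos_hull_add: assumes "x \<in> pos_hull G" "y \<in> pos_hull G" shows "x + y \<in> pos_hull G"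
proof -
  obtain c where c: "x = (\<Sum>g\<in>G. c g *\<^sub>R g)" "\<forall>g. 0 \<le> c g" using assms(1) unfolding pos_hull_def by auto
  obtain d where d: "y = (\<Sum>g\<in>G. d g *\<^sub>R g)" "\<forall>g. 0 \<le> d g" using assms(2) unfolding pos_hull_def by auto
  have "x + y = (\<Sum>g\<in>G. (c g + d g) *\<^sub>R g)" by (simp add: c d scaleR_add_left sum.distrib)
  moreover have "\<forall>g. 0 \<le> c g + d g" using c d by (simp add: add_nonneg_nonneg)
  ultimately show ?thesis by (rule pos_hullI)
qed

lemma pos_hull_scale: assumes "x \<in> pos_hull G" "0 \<le> t" shows "t *\<^sub>R x \<in> pos_hull G"
proof -
  obtain c where c: "x = (\<Sum>g\<in>G. c g *\<^sub>R g)" "\<forall>g. 0 \<le> c g" using assms(1) unfolding pos_hull_def by auto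
  have "t *\<^sub>R x = (\<Sum>g\<in>G. (t * c g) *\<^sub>R g)" by (simp add: c scaleR_sum_right)
  moreover have "\<forall>g. 0 \<le> t * c g" using c assms by simp
  ultimately show ?thesis by (rule pos_hullI)
qed

lemma pos_hull_base: assumes "finite G" "g \<in> G" shows "g \<in> pos_hull G"
proof -
  have "(\<Sum>h\<in>G. (if h = g then 1 else 0) *\<^sub>R h) = (\<Sum>h\<in>G. if h = g then h else 0)"
    by (rule sum.cong) auto
  also have "\<dots> = g" using assms by simp
  finally have "g = (\<Sum>h\<in>G. (if h = g then 1 else 0) *\<^sub>R h)" by simp
  moreover have "\<forall>h. 0 \<le> (if h = g then 1 else (0::real))" by simp
  ultimately show ?thesis by (rule pos_hullI)
qed

lemma pos_hull_remove:
  assumes "finite G" "g \<in> G" "x \<in> pos_hull G"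
  shows "\<exists>a\<ge>0. \<exists>x'\<in>pos_hull (G - {g}). x = a *\<^sub>R g + x'"
proof -
  obtain c where c: "x = (\<Sum>g\<in>G. c g *\<^sub>R g)" "\<forall>g. 0 \<le> c g" using assms(3) unfolding pos_hull_def by auto
  have "x = c g *\<^sub>R g + (\<Sum>h\<in>G-{g}. c h *\<^sub>R h)" using c(1) assms(1,2) by (simp add: sum.remove)
  moreover have "(\<Sum>h\<in>G-{g}. c h *\<^sub>R h) \<in> pos_hull (G - {g})" using c(2) unfolding pos_hull_def by blast
  ultimately show ?thesis using c(2) by blast
qed

lemma pos_hull_mono: assumes "finite G'" "G \<subseteq> G'" shows "pos_hull G \<subseteq> pos_hull G'"
proof
  fix x assume "x \<in> pos_hull G"
  then obtain c where c: "x = (\<Sum>g\<in>G. c g *\<^sub>R g)" "\<forall>g. 0 \<le> c g" unfolding pos_hull_def by auto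
  define d where "d h = (if h \<in> G then c h else 0)" for h
  have "(\<Sum>g\<in>G'. d g *\<^sub>R g) = (\<Sum>g\<in>G. d g *\<^sub>R g)"
    by (rule sum.mono_neutral_right) (use assms in \<open>auto simp: d_def\<close>)
  also have "\<dots> = x" using c by (simp add: d_def)
  finally show "x \<in> pos_hull G'" using c(2) unfolding pos_hull_def d_def
    by (intro CollectI exI[of _ d]) (auto simp: d_def)
qed

lemma pos_hull_sum: assumes "finite A" "\<And>a. a \<in> A \<Longrightarrow> f a \<in> pos_hull G" shows "(\<Sum>a\<in>A. f a) \<in> pos_hull G"
  using assms by (induction A rule: finite_induct) (auto intro: pos_hull_add pos_hull_0)

lemma pos_hull_subset_span: "pos_hull G \<subseteq> span G"
proof
  fix x assume "x \<in> pos_hull G"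
  then obtain c where c: "x = (\<Sum>g\<in>G. c g *\<^sub>R g)" unfolding pos_hull_def by auto
  show "x \<in> span G" unfolding c by (rule span_sum, rule span_scale, rule span_base) simp
qed

lemma pos_hull_convex: "convex (pos_hull G)"
  unfolding convex_def by (auto intro: pos_hull_add pos_hull_scale)

lemma rat_coneD:
  assumes "rat_cone N \<sigma>"
  shows "\<exists>G. finite G \<and> G \<subseteq> N \<and> \<sigma> = pos_hull G" "\<And>x. x \<in> \<sigma> \<Longrightarrow> - x \<in> \<sigma> \<Longrightarrow> x = 0"
  using assms unfolding rat_cone_def by auto

lemma cone_0: "rat_cone N \<sigma> \<Longrightarrow> 0 \<in> \<sigma>"
  using rat_coneD(1) pos_hull_0 by metis
lemma cone_add: "rat_cone N \<sigma> \<Longrightarrow> x \<in> \<sigma> \<Longrightarrow> y \<in> \<sigma> \<Longrightarrow> x + y \<in> \<sigma>"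
  using rat_coneD(1) pos_hull_add by metis
lemma cone_scale: "rat_cone N \<sigma> \<Longrightarrow> x \<in> \<sigma> \<Longrightarrow> 0 \<le> t \<Longrightarrow> t *\<^sub>R x \<in> \<sigma>"
  using rat_coneD(1) pos_hull_scale by metis
lemma cone_convex: "rat_cone N \<sigma> \<Longrightarrow> convex \<sigma>"
  using rat_coneD(1) pos_hull_convex by metis
lemma cone_pointed: "rat_cone N \<sigma> \<Longrightarrow> x \<in> \<sigma> \<Longrightarrow> y \<in> \<sigma> \<Longrightarrow> x + y = 0 \<Longrightarrow> x = 0"
  using rat_coneD(2)[of N \<sigma> x] by (metis add.commute add_eq_0_iff)

section \<open>Lattices\<close>

lemma int_span_0: "0 \<in> int_span B"
  unfolding int_span_def by (rule CollectI, rule exI[of _ "\<lambda>_. 0"]) simp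

lemma int_span_diff: assumes "x \<in> int_span B" "y \<in> int_span B" shows "x - y \<in> int_span B"
proof -
  obtain c where c: "x = (\<Sum>b\<in>B. of_int (c b) *\<^sub>R b)" using assms(1) unfolding int_span_def by auto
  obtain d where d: "y = (\<Sum>b\<in>B. of_int (d b) *\<^sub>R b)" using assms(2) unfolding int_span_def by auto
  have "x - y = (\<Sum>b\<in>B. of_int (c b - d b) *\<^sub>R b)" by (simp add: c d scaleR_diff_left sum_subtractf)
  then show ?thesis by (rule int_spanI)
qed

lemma int_span_add: assumes "x \<in> int_span B" "y \<in> int_span B" shows "x + y \<in> int_span B"
  using int_span_diff[OF assms(1) int_span_diff[OF int_span_0 assms(2)]] by simp

lemma int_span_intmult: assumes "x \<in> int_span B" shows "of_int k *\<^sub>R x \<in> int_span B"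
proof -
  obtain c where c: "x = (\<Sum>b\<in>B. of_int (c b) *\<^sub>R b)" using assms(1) unfolding int_span_def by auto
  have "of_int k *\<^sub>R x = (\<Sum>b\<in>B. of_int (k * c b) *\<^sub>R b)" by (simp add: c scaleR_sum_right)
  then show ?thesis by (rule int_spanI)
qed

lemma lattice_N: assumes "is_lattice N" obtains B where "finite B" "independent B" "N = int_span B"
  using assms unfolding is_lattice_def zbasis_def by auto

lemma lattice_0: "is_lattice N \<Longrightarrow> 0 \<in> N"
  by (metis lattice_N int_span_0)
lemma lattice_diff: "is_lattice N \<Longrightarrow> x \<in> N \<Longrightarrow> y \<in> N \<Longrightarrow> x - y \<in> N"
  by (metis lattice_N int_span_diff)
lemma lattice_add: "is_lattice N \<Longrightarrow> x \<in> N \<Longrightarrow> y \<in> N \<Longrightarrow> x + y \<in> N"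
  by (metis lattice_N int_span_add)
lemma lattice_intmult: "is_lattice N \<Longrightarrow> x \<in> N \<Longrightarrow> of_int k *\<^sub>R x \<in> N"
  by (metis lattice_N int_span_intmult)

lemma intlinD: "m \<in> intlin N \<Longrightarrow> linear m" "m \<in> intlin N \<Longrightarrow> x \<in> N \<Longrightarrow> m x \<in> \<int>"
  unfolding intlin_def by auto

lemma intlin_0: "(\<lambda>x. 0) \<in> intlin N"
  unfolding intlin_def by (simp add: linear_zero)

lemma intlin_diff: "m \<in> intlin N \<Longrightarrow> m' \<in> intlin N \<Longrightarrow> (\<lambda>x. m x - m' x) \<in> intlin N"
  unfolding intlin_def by (auto intro: linear_compose_sub)
lemma intlin_add: "m \<in> intlin N \<Longrightarrow> m' \<in> intlin N \<Longrightarrow> (\<lambda>x. m x + m' x) \<in> intlin N"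
  unfolding intlin_def by (auto intro: linear_compose_add)
lemma intlin_intmult: "m \<in> intlin N \<Longrightarrow> (\<lambda>x. of_int k * m x) \<in> intlin N"
proof -
  assume "m \<in> intlin N"
  then show ?thesis unfolding intlin_def
    using linear_compose_scale_right[of m "of_int k"] by auto
qed

lemma PL_0: "(\<lambda>x. 0) \<in> PL N S"
  unfolding PL_def by (auto intro!: bexI[OF _ intlin_0])

lemma PLD: "f \<in> PL N S \<Longrightarrow> \<sigma> \<in> S \<Longrightarrow> \<exists>m\<in>intlin N. \<forall>x\<in>\<sigma>. f x = m x"
  unfolding PL_def by blast

lemma PL_diff: assumes "f \<in> PL N S" "g \<in> PL N S" shows "(\<lambda>x. f x - g x) \<in> PL N S"
  unfolding PL_def
proof (intro CollectI ballI)
  fix \<sigma> assume "\<sigma> \<in> S"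
  then obtain m m' where "m \<in> intlin N" "m' \<in> intlin N" "\<forall>x\<in>\<sigma>. f x = m x" "\<forall>x\<in>\<sigma>. g x = m' x"
    using assms PLD by metis
  then show "\<exists>m\<in>intlin N. \<forall>x\<in>\<sigma>. f x - g x = m x" by (intro bexI[of _ "\<lambda>x. m x - m' x"] intlin_diff) auto
qed

lemma PL_add: assumes "f \<in> PL N S" "g \<in> PL N S" shows "(\<lambda>x. f x + g x) \<in> PL N S"
  unfolding PL_def
proof (intro CollectI ballI)
  fix \<sigma> assume "\<sigma> \<in> S"
  then obtain m m' where "m \<in> intlin N" "m' \<in> intlin N" "\<forall>x\<in>\<sigma>. f x = m x" "\<forall>x\<in>\<sigma>. g x = m' x"
    using assms PLD by metis
  then show "\<exists>m\<in>intlin N. \<forall>x\<in>\<sigma>. f x + g x = m x" by (intro bexI[of _ "\<lambda>x. m x + m' x"] intlin_add) auto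
qed

lemma PL_intmult: assumes "f \<in> PL N S" shows "(\<lambda>x. of_int k * f x) \<in> PL N S"
  unfolding PL_def
proof (intro CollectI ballI)
  fix \<sigma> assume "\<sigma> \<in> S"
  then obtain m where "m \<in> intlin N" "\<forall>x\<in>\<sigma>. f x = m x"
    using assms PLD by metis
  then show "\<exists>m\<in>intlin N. \<forall>x\<in>\<sigma>. of_int k * f x = m x" by (intro bexI[OF _ intlin_intmult]) auto
qed

section \<open>Orthogonal projection\<close>

lemma perp_proj_ex: fixes A :: "'a::euclidean_space set"
  shows "\<exists>y. x - y \<in> span A \<and> (\<forall>a\<in>A. inner a y = 0)"
proof -
  obtain y z where "y \<in> span A" "\<And>w. w \<in> span A \<Longrightarrow> orthogonal z w" "x = y + z"
    using orthogonal_subspace_decomp_exists by metis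
  then show ?thesis
    by (intro exI[of _ z]) (auto simp: orthogonal_def inner_commute intro: span_base)
qed

lemma perp_proj_uniq: fixes A :: "'a::euclidean_space set"
  assumes "x - y \<in> span A" "\<forall>a\<in>A. inner a y = 0" "x - y' \<in> span A" "\<forall>a\<in>A. inner a y' = 0"
  shows "y = y'"
proof -
  have d: "y' - y \<in> span A" using span_diff[OF assms(1) assms(3)] by (simp add: algebra_simps)
  have "orthogonal (y' - y) a" if "a \<in> A" for a
    using assms(2,4) that by (simp add: orthogonal_def inner_diff_right inner_commute)
  then have "orthogonal (y' - y) (y' - y)" using orthogonal_to_span[OF d] by blast
  then show ?thesis by (simp add: orthogonal_self)
qed

lemma perp_proj_char: fixes A :: "'a::euclidean_space set"
  shows "x - perp_proj A x \<in> span A \<and> (\<forall>a\<in>A. inner a (perp_proj A x) = 0)"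
proof -
  obtain y where y: "x - y \<in> span A \<and> (\<forall>a\<in>A. inner a y = 0)" using perp_proj_ex by blast
  have "perp_proj A x = y" unfolding perp_proj_def
    by (rule the_equality) (use y perp_proj_uniq in blast)+
  then show ?thesis using y by simp
qed

lemma perp_proj_eqI: fixes A :: "'a::euclidean_space set"
  assumes "x - y \<in> span A" "\<forall>a\<in>A. inner a y = 0" shows "perp_proj A x = y"
  using perp_proj_char[of x A] perp_proj_uniq assms by blast

lemma perp_proj_eq_span: fixes A :: "'a::euclidean_space set"
  assumes "perp_proj A x = perp_proj A x'" shows "x - x' \<in> span A"
proof -
  have "(x - perp_proj A x) - (x' - perp_proj A x') \<in> span A"
    using perp_proj_char span_diff by blast
  then show ?thesis using assms by simp
qed

lemma perp_proj_0: fixes A :: "'a::euclidean_space set" shows "perp_proj A 0 = 0"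
  by (rule perp_proj_eqI) (auto simp: span_0)

lemma linear_vanish_proj: fixes A :: "'a::euclidean_space set"
  assumes "linear L" "\<And>a. a \<in> A \<Longrightarrow> L a = 0" shows "L (perp_proj A x) = L x"
proof -
  have "L (x - perp_proj A x) = 0"
    using linear_eq_0_on_span[OF assms(1), of A "x - perp_proj A x"] assms(2) perp_proj_char by blast
  then have "L x - L (perp_proj A x) = 0" using linear_diff[OF assms(1)] by metis
  then show ?thesis by simp
qed

section \<open>Rays\<close>

lemma ray_shape:
  fixes \<rho> :: "'a::euclidean_space set"
  assumes rc: "rat_cone N \<rho>" and d: "dim \<rho> = 1"
  shows "\<exists>g\<in>N. g \<noteq> 0 \<and> \<rho> = {t *\<^sub>R g | t. 0 \<le> t}"
proof -
  obtain G where G: "finite G" "G \<subseteq> N" "\<rho> = pos_hull G" using rat_coneD(1)[OF rc] by blast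
  have "\<exists>g\<in>G. g \<noteq> 0"
  proof (rule ccontr)
    assume "\<not> ?thesis"
    then have "G \<subseteq> {0}" by auto
    then have "span G \<subseteq> span {0}" by (rule span_mono)
    then have "span G \<subseteq> {0}" by simp
    then have "\<rho> \<subseteq> {0}" using G(3) pos_hull_subset_span by blast
    then have "dim \<rho> = 0" by (simp only: dim_eq_0)
    then show False using d by simp
  qed
  then obtain g where g: "g \<in> G" "g \<noteq> 0" by blast
  have gr: "g \<in> \<rho>" using G g pos_hull_base by blast
  have inspan: "h \<in> span {g}" if "h \<in> \<rho>" for h
  proof (rule ccontr)
    assume h: "h \<notin> span {g}"
    have "independent {g}" using g by (simp add: independent_insert)
    then have "independent (insert h {g})" using h by (simp add: independent_insertI)
    moreover have "insert h {g} \<subseteq> \<rho>" using that gr by auto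
    ultimately have "card (insert h {g}) \<le> dim \<rho>" using independent_card_le_dim by blast
    moreover have "h \<noteq> g" using h span_base by blast
    ultimately show False using d by simp
  qed
  have coef: "\<exists>a\<ge>0. h = a *\<^sub>R g" if "h \<in> G" for h
  proof -
    have hr: "h \<in> \<rho>" using that G pos_hull_base by blast
    then obtain a where a: "h = a *\<^sub>R g" using inspan by (auto simp: span_singleton)
    have "0 \<le> a"
    proof (rule ccontr)
      assume "\<not> 0 \<le> a"
      then have "(- 1 / a) *\<^sub>R h = - g" using a by simp
      moreover have "(- 1 / a) *\<^sub>R h \<in> \<rho>" using \<open>\<not> 0 \<le> a\<close> by (intro cone_scale[OF rc hr]) simp
      ultimately have "g = 0" using rat_coneD(2)[OF rc gr] by simp
      then show False using g by simp
    qed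
    then show ?thesis using a by blast
  qed
  then obtain a where a: "\<And>h. h \<in> G \<Longrightarrow> 0 \<le> a h \<and> h = a h *\<^sub>R g" by metis
  have "\<rho> = {t *\<^sub>R g | t. 0 \<le> t}"
  proof
    show "\<rho> \<subseteq> {t *\<^sub>R g | t. 0 \<le> t}"
    proof
      fix x assume "x \<in> \<rho>"
      then obtain c where c: "x = (\<Sum>h\<in>G. c h *\<^sub>R h)" "\<forall>h. 0 \<le> c h" using G(3) unfolding pos_hull_def by auto
      have "x = (\<Sum>h\<in>G. (c h * a h) *\<^sub>R g)" unfolding c(1)
      proof (rule sum.cong)
        fix h assume "h \<in> G"
        then have "h = a h *\<^sub>R g" using a by blast
        then show "c h *\<^sub>R h = (c h * a h) *\<^sub>R g" by (metis scaleR_scaleR)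
      qed simp
      also have "\<dots> = (\<Sum>h\<in>G. c h * a h) *\<^sub>R g" by (simp add: scaleR_sum_left)
      finally show "x \<in> {t *\<^sub>R g | t. 0 \<le> t}" using c(2) a by (auto intro!: sum_nonneg)
    qed
    show "{t *\<^sub>R g | t. 0 \<le> t} \<subseteq> \<rho>" using cone_scale[OF rc gr] by auto
  qed
  then show ?thesis using g G by blast
qed

lemma lattice_line_discrete:
  assumes L: "is_lattice N" and gN: "g \<in> N" and g0: "g \<noteq> 0"
  shows "\<exists>t0>0. t0 *\<^sub>R g \<in> N \<and> (\<forall>t. t *\<^sub>R g \<in> N \<longrightarrow> (\<exists>k::int. t = of_int k * t0))"
proof -
  obtain B where B: "finite B" "independent B" "N = int_span B" using lattice_N[OF L] by blast
  obtain c where c: "g = (\<Sum>b\<in>B. of_int (c b) *\<^sub>R b)" using gN B(3) unfolding int_span_def by auto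
  have "\<exists>b\<in>B. c b \<noteq> 0"
  proof (rule ccontr)
    assume "\<not> ?thesis" then have "g = 0" using c by simp
    then show False using g0 by simp
  qed
  then obtain b0 where b0: "b0 \<in> B" "c b0 \<noteq> 0" by blast
  define T where "T = {t. t *\<^sub>R g \<in> N}"
  have Tint: "t * of_int (c b0) \<in> \<int>" if "t \<in> T" for t
  proof -
    have "t *\<^sub>R g \<in> int_span B" using that B(3) unfolding T_def by simp
    then obtain d where d: "t *\<^sub>R g = (\<Sum>b\<in>B. of_int (d b) *\<^sub>R b)" unfolding int_span_def by auto
    have "(\<Sum>b\<in>B. (t * of_int (c b) - of_int (d b)) *\<^sub>R b) = t *\<^sub>R g - (\<Sum>b\<in>B. of_int (d b) *\<^sub>R b)"
      by (simp add: c scaleR_diff_left sum_subtractf scaleR_sum_right)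
    then have z: "(\<Sum>b\<in>B. (t * of_int (c b) - of_int (d b)) *\<^sub>R b) = 0" using d by simp
    define u where "u = (\<lambda>b. t * of_int (c b) - of_int (d b))"
    have nd: "\<not> (\<exists>u. (\<exists>v\<in>B. u v \<noteq> 0) \<and> (\<Sum>v\<in>B. u v *\<^sub>R v) = 0)"
      using B(2) dependent_finite[OF B(1)] by simp
    have "(\<Sum>v\<in>B. u v *\<^sub>R v) = 0" using z unfolding u_def .
    then have "\<forall>v\<in>B. u v = 0" using nd by blast
    then have "\<forall>b\<in>B. t * of_int (c b) - of_int (d b) = 0" unfolding u_def .
    then have "t * of_int (c b0) = of_int (d b0)" using b0 by simp
    then show ?thesis by simp
  qed
  have Tdiff: "s - t \<in> T" if "s \<in> T" "t \<in> T" for s t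
    using lattice_diff[OF L, of "s *\<^sub>R g" "t *\<^sub>R g"] that unfolding T_def by (simp add: scaleR_diff_left)
  have Tmult: "of_int k * t \<in> T" if "t \<in> T" for t k
    using lattice_intmult[OF L, of "t *\<^sub>R g" k] that unfolding T_def by simp
  have T1: "1 \<in> T" using gN unfolding T_def by simp
  define F where "F = T \<inter> {0<..1}"
  define C where "C = \<bar>c b0\<bar>"
  have "F \<subseteq> (\<lambda>k. of_int k / of_int (c b0)) ` {-C..C}"
  proof
    fix t assume t: "t \<in> F"
    then have "t \<in> T" unfolding F_def by simp
    then have "t * of_int (c b0) \<in> \<int>" by (rule Tint)
    then obtain k where k: "t * of_int (c b0) = of_int k" by (elim Ints_cases)
    have "t = of_int k / of_int (c b0)" using k b0 by (simp add: field_simps)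
    moreover have "\<bar>of_int k\<bar> \<le> (of_int C :: real)"
    proof -
      have "\<bar>of_int k\<bar> = \<bar>t\<bar> * \<bar>of_int (c b0)\<bar>" using k by (metis abs_mult)
      also have "\<dots> \<le> 1 * \<bar>of_int (c b0)\<bar>" using t unfolding F_def by (intro mult_right_mono) auto
      finally show ?thesis unfolding C_def by simp
    qed
    then have "k \<in> {-C..C}" by auto
    ultimately show "t \<in> (\<lambda>k. of_int k / of_int (c b0)) ` {-C..C}" by blast
  qed
  then have fin: "finite F" by (rule finite_subset) simp
  have "1 \<in> F" using T1 unfolding F_def by simp
  then have ne: "F \<noteq> {}" by blast
  define t0 where "t0 = Min F"
  have t0F: "t0 \<in> F" using Min_in[OF fin ne] unfolding t0_def .
  have t0min: "t0 \<le> t" if "t \<in> F" for t using Min_le[OF fin that] unfolding t0_def .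
  have t0pos: "0 < t0" and t0le: "t0 \<le> 1" and t0T: "t0 \<in> T" using t0F unfolding F_def by auto
  have "\<exists>k::int. t = of_int k * t0" if "t \<in> T" for t
  proof -
    define k where "k = \<lfloor>t / t0\<rfloor>"
    define r where "r = t - of_int k * t0"
    have rT: "r \<in> T" unfolding r_def using Tdiff[OF that Tmult[OF t0T]] .
    have a1: "of_int k \<le> t / t0" unfolding k_def by (rule of_int_floor_le)
    have a2: "t / t0 < of_int k + 1" unfolding k_def by (rule real_of_int_floor_add_one_gt)
    have "of_int k * t0 \<le> t" using a1 pos_le_divide_eq[OF t0pos] by blast
    moreover have "t < (of_int k + 1) * t0" using a2 pos_divide_less_eq[OF t0pos] by blast
    ultimately have "of_int k * t0 \<le> t" "t < (of_int k + 1) * t0" by auto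
    then have r0: "0 \<le> r" and r1: "r < t0" unfolding r_def by (simp_all add: algebra_simps)
    have "r = 0"
    proof (rule ccontr)
      assume "r \<noteq> 0"
      then have "0 < r" using r0 by simp
      then have "r \<in> F" using r1 t0le rT unfolding F_def by simp
      then have "t0 \<le> r" by (rule t0min)
      then show False using r1 by simp
    qed
    then have "t = of_int k * t0" unfolding r_def by simp
    then show ?thesis by blast
  qed
  then have "\<forall>t. t *\<^sub>R g \<in> N \<longrightarrow> (\<exists>k::int. t = of_int k * t0)" unfolding T_def by simp
  moreover have "t0 *\<^sub>R g \<in> N" using t0T unfolding T_def by simp
  ultimately show ?thesis using t0pos by blast
qed

definition is_pg :: "'a::euclidean_space set \<Rightarrow> 'a set \<Rightarrow> 'a \<Rightarrow> bool" where
  "is_pg N \<rho> u \<longleftrightarrow> u \<in> \<rho> \<inter> N \<and> u \<noteq> 0 \<and> (\<forall>v\<in>\<rho> \<inter> N. \<exists>k::nat. v = real k *\<^sub>R u)"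

lemma is_pg_unique: assumes "is_pg N \<rho> u" "is_pg N \<rho> u'" shows "u = u'"
proof -
  obtain k where k: "u' = real k *\<^sub>R u" using assms unfolding is_pg_def by blast
  obtain k' where k': "u = real k' *\<^sub>R u'" using assms unfolding is_pg_def by blast
  have "u = real k' *\<^sub>R u'" by (rule k')
  also have "\<dots> = real k' *\<^sub>R (real k *\<^sub>R u)" by (simp only: k)
  also have "\<dots> = (real k' * real k) *\<^sub>R u" by simp
  finally have e: "u = (real k' * real k) *\<^sub>R u" .
  have "(real k' * real k - 1) *\<^sub>R u = (real k' * real k) *\<^sub>R u - u" by (simp only: scaleR_diff_left scaleR_one)
  also have "\<dots> = 0" using e by simp
  finally have "(real k' * real k - 1) *\<^sub>R u = 0" .
  moreover have "u \<noteq> 0" using assms(1) unfolding is_pg_def by simp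
  ultimately have "real k' * real k - 1 = 0" by simp
  then have "real (k' * k) = 1" by simp
  then have "k' * k = 1" by (simp only: of_nat_eq_1_iff)
  then have "k = 1" by simp
  then show ?thesis using k by simp
qed

lemma prim_gen_alt: "prim_gen N \<rho> = (THE u. is_pg N \<rho> u)"
  by (simp add: prim_gen_def is_pg_def)

lemma prim_gen_is_pg: assumes h: "is_pg N \<rho> u" shows "prim_gen N \<rho> = u"
  unfolding prim_gen_alt
proof (rule the_equality)
  show "is_pg N \<rho> u" by (rule h)
  fix v assume "is_pg N \<rho> v"
  then show "v = u" using h by (rule is_pg_unique)
qed

lemma prim_gen_prop:
  fixes \<rho> :: "'a::euclidean_space set"
  assumes L: "is_lattice N" and rc: "rat_cone N \<rho>" and d: "dim \<rho> = 1"
  shows "is_pg N \<rho> (prim_gen N \<rho>)" "\<rho> = {t *\<^sub>R prim_gen N \<rho> | t. 0 \<le> t}"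
proof -
  obtain g where g: "g \<in> N" "g \<noteq> 0" "\<rho> = {t *\<^sub>R g | t. 0 \<le> t}" using ray_shape[OF rc d] by blast
  obtain t0 where t0: "t0 > 0" "t0 *\<^sub>R g \<in> N" "\<forall>t. t *\<^sub>R g \<in> N \<longrightarrow> (\<exists>k::int. t = of_int k * t0)"
    using lattice_line_discrete[OF L g(1,2)] by blast
  define u where "u = t0 *\<^sub>R g"
  have pg: "is_pg N \<rho> u"
    unfolding is_pg_def
  proof (intro conjI ballI)
    show "u \<in> \<rho> \<inter> N" using t0 g(3) unfolding u_def by auto
    show "u \<noteq> 0" using t0 g unfolding u_def by simp
    fix v assume "v \<in> \<rho> \<inter> N"
    then obtain s where s: "v = s *\<^sub>R g" "0 \<le> s" "s *\<^sub>R g \<in> N" using g(3) by auto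
    obtain k where k: "s = of_int k * t0" using t0(3) s(3) by blast
    have "0 \<le> k" using s(2) k t0(1) by (simp add: zero_le_mult_iff)
    then have "v = real (nat k) *\<^sub>R u" using s k unfolding u_def by simp
    then show "\<exists>k::nat. v = real k *\<^sub>R u" by blast
  qed
  then have pu: "prim_gen N \<rho> = u" by (rule prim_gen_is_pg)
  then show "is_pg N \<rho> (prim_gen N \<rho>)" using pg by simp
  have "\<rho> = {t *\<^sub>R u | t. 0 \<le> t}"
  proof -
    have "t *\<^sub>R g = (t / t0) *\<^sub>R u" for t using t0(1) unfolding u_def by simp
    moreover have "t *\<^sub>R u = (t * t0) *\<^sub>R g" for t unfolding u_def by simp
    note e = this
    show ?thesis unfolding g(3)
    proof (intro equalityI subsetI)
      fix x assume "x \<in> {t *\<^sub>R g |t. 0 \<le> t}"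
      then obtain t where "x = t *\<^sub>R g" "0 \<le> t" by blast
      then show "x \<in> {t *\<^sub>R u |t. 0 \<le> t}" using e t0(1) by (intro CollectI exI[of _ "t / t0"]) simp
    next
      fix x assume "x \<in> {t *\<^sub>R u |t. 0 \<le> t}"
      then obtain t where "x = t *\<^sub>R u" "0 \<le> t" by blast
      then show "x \<in> {t *\<^sub>R g |t. 0 \<le> t}" using t0(1) unfolding u_def by (intro CollectI exI[of _ "t * t0"]) simp
    qed
  qed
  then show "\<rho> = {t *\<^sub>R prim_gen N \<rho> | t. 0 \<le> t}" using pu by simp
qed

lemma fan_cone: "is_fan N S \<Longrightarrow> \<sigma> \<in> S \<Longrightarrow> rat_cone N \<sigma>"
  unfolding is_fan_def by blast

lemma raysD: "\<rho> \<in> rays S \<Longrightarrow> \<rho> \<in> S" "\<rho> \<in> rays S \<Longrightarrow> dim \<rho> = 1"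
  unfolding rays_def by auto

lemma ray_pg:
  fixes S :: "'a::euclidean_space set set"
  assumes "is_lattice N" "is_fan N S" "\<rho> \<in> rays S"
  shows "prim_gen N \<rho> \<in> \<rho>" "prim_gen N \<rho> \<in> N" "prim_gen N \<rho> \<noteq> 0"
    "\<rho> = {t *\<^sub>R prim_gen N \<rho> | t. 0 \<le> t}"
  using prim_gen_prop[OF assms(1) fan_cone[OF assms(2) raysD(1)[OF assms(3)]] raysD(2)[OF assms(3)]]
  unfolding is_pg_def by auto

lemma ray_pg_inj:
  fixes S :: "'a::euclidean_space set set"
  assumes "is_lattice N" "is_fan N S" "\<rho> \<in> rays S" "\<rho>' \<in> rays S" "prim_gen N \<rho> = prim_gen N \<rho>'"
  shows "\<rho> = \<rho>'"
proof -
  have "\<rho> = {t *\<^sub>R prim_gen N \<rho> | t. 0 \<le> t}" by (rule ray_pg(4)[OF assms(1,2,3)])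
  also have "\<dots> = {t *\<^sub>R prim_gen N \<rho>' | t. 0 \<le> t}" by (simp only: assms(5))
  also have "\<dots> = \<rho>'" by (rule ray_pg(4)[OF assms(1,2,4), symmetric])
  finally show ?thesis .
qed

lemma unimodD: assumes "unimodular_fan N S" shows "is_lattice N" "is_fan N S"
  "\<forall>\<sigma>\<in>S. \<exists>B. zbasis N B \<and> prim_gen N ` {\<rho>\<in>rays S. \<rho> \<subseteq> \<sigma>} \<subseteq> B"
  using assms unfolding unimodular_fan_def by auto

lemma fan_face: "is_fan N S \<Longrightarrow> \<sigma> \<in> S \<Longrightarrow> \<tau> face_of \<sigma> \<Longrightarrow> \<tau> \<noteq> {} \<Longrightarrow> \<tau> \<in> S"
  unfolding is_fan_def by blast

lemma fan_inter: "is_fan N S \<Longrightarrow> \<sigma> \<in> S \<Longrightarrow> \<tau> \<in> S \<Longrightarrow> (\<sigma> \<inter> \<tau>) face_of \<sigma>"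
  unfolding is_fan_def by blast

lemma cone_span_rays:
  fixes S :: "'a::euclidean_space set set"
  assumes L: "is_lattice N" and F: "is_fan N S" and \<sigma>S: "\<sigma> \<in> S"
  shows "\<sigma> \<subseteq> span (prim_gen N ` {\<rho>\<in>rays S. \<rho> \<subseteq> \<sigma>})"
proof -
  let ?U = "prim_gen N ` {\<rho>\<in>rays S. \<rho> \<subseteq> \<sigma>}"
  have rc: "rat_cone N \<sigma>" using fan_cone[OF F \<sigma>S] .
  obtain G0 where G0: "finite G0" "G0 \<subseteq> N" "\<sigma> = pos_hull G0" using rat_coneD(1)[OF rc] by blast
  define P where "P G \<longleftrightarrow> G \<subseteq> G0 \<and> pos_hull G = \<sigma>" for G
  have "P G0" using G0 unfolding P_def by simp
  then obtain G where PG: "P G" and Gmin: "\<And>G'. P G' \<Longrightarrow> card G \<le> card G'"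
    using ex_has_least_nat[of P G0 card] by blast
  have finG: "finite G" using PG G0(1) unfolding P_def by (auto intro: finite_subset)
  have sG: "pos_hull G = \<sigma>" using PG unfolding P_def by simp
  have GinU: "g \<in> span ?U" if gG: "g \<in> G" for g
  proof -
    let ?G' = "G - {g}"
    have sub': "pos_hull ?G' \<subseteq> \<sigma>" using pos_hull_mono[OF finG, of ?G'] sG by auto
    have notin: "g \<notin> pos_hull ?G'"
    proof
      assume gin: "g \<in> pos_hull ?G'"
      have "\<sigma> \<subseteq> pos_hull ?G'"
      proof
        fix x assume "x \<in> \<sigma>"
        then obtain a x' where ax: "0 \<le> a" "x' \<in> pos_hull ?G'" "x = a *\<^sub>R g + x'"
          using pos_hull_remove[OF finG gG] sG by blast
        show "x \<in> pos_hull ?G'" unfolding ax(3) by (rule pos_hull_add[OF pos_hull_scale[OF gin ax(1)] ax(2)])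
      qed
      then have "P ?G'" using sub' PG unfolding P_def by auto
      then have "card G \<le> card ?G'" by (rule Gmin)
      moreover have "card ?G' < card G" using finG gG by (rule card_Diff1_less)
      ultimately show False by simp
    qed
    have g0: "g \<noteq> 0"
    proof
      assume "g = 0"
      then have "g \<in> pos_hull ?G'" using pos_hull_0[of ?G'] by simp
      then show False using notin by simp
    qed
    have g\<sigma>: "g \<in> \<sigma>" using pos_hull_base[OF finG gG] sG by simp
    define T where "T = {t *\<^sub>R g | t. 0 \<le> t}"
    have T\<sigma>: "T \<subseteq> \<sigma>" unfolding T_def using cone_scale[OF rc g\<sigma>] by blast
    have convT: "convex T"
    proof (rule convexI)
      fix x y u v :: real
      fix x y assume "x \<in> T" "y \<in> T" and uv: "0 \<le> u" "0 \<le> v" "u + v = 1"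
      then obtain t1 t2 where tt: "x = t1 *\<^sub>R g" "0 \<le> t1" "y = t2 *\<^sub>R g" "0 \<le> t2" unfolding T_def by blast
      have "u *\<^sub>R x + v *\<^sub>R y = (u * t1 + v * t2) *\<^sub>R g" using tt by (simp add: algebra_simps)
      moreover have "0 \<le> u * t1 + v * t2" using uv tt by (simp add: add_nonneg_nonneg mult_nonneg_nonneg)
      ultimately show "u *\<^sub>R x + v *\<^sub>R y \<in> T" unfolding T_def by blast
    qed
    have face: "T face_of \<sigma>"
      unfolding face_of_def
    proof (intro conjI ballI impI)
      show "T \<subseteq> \<sigma>" by (rule T\<sigma>)
      show "convex T" by (rule convT)
      fix a b x assume a: "a \<in> \<sigma>" and b: "b \<in> \<sigma>" and xT: "x \<in> T" and seg: "x \<in> open_segment a b"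
      obtain u where u: "0 < u" "u < 1" "x = (1 - u) *\<^sub>R a + u *\<^sub>R b" using seg by (auto simp: in_segment)
      obtain s where s: "x = s *\<^sub>R g" "0 \<le> s" using xT unfolding T_def by blast
      obtain \<alpha> a' where aa: "0 \<le> \<alpha>" "a' \<in> pos_hull ?G'" "a = \<alpha> *\<^sub>R g + a'"
        using pos_hull_remove[OF finG gG] a sG by blast
      obtain \<beta> b' where bb: "0 \<le> \<beta>" "b' \<in> pos_hull ?G'" "b = \<beta> *\<^sub>R g + b'"
        using pos_hull_remove[OF finG gG] b sG by blast
      define w where "w = (1 - u) *\<^sub>R a' + u *\<^sub>R b'"
      define \<gamma> where "\<gamma> = (1 - u) * \<alpha> + u * \<beta>"
      have wG': "w \<in> pos_hull ?G'" unfolding w_def using u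
        by (intro pos_hull_add pos_hull_scale aa(2) bb(2)) simp_all
      have "s *\<^sub>R g = \<gamma> *\<^sub>R g + w" using s(1) u(3) aa(3) bb(3) unfolding w_def \<gamma>_def
        by (simp add: algebra_simps)
      then have eq: "(s - \<gamma>) *\<^sub>R g = w" by (simp add: algebra_simps)
      have "\<not> 0 < s - \<gamma>"
      proof
        assume pos: "0 < s - \<gamma>"
        have "(1 / (s - \<gamma>)) *\<^sub>R w = (1 / (s - \<gamma>)) *\<^sub>R ((s - \<gamma>) *\<^sub>R g)" by (simp only: eq)
        also have "\<dots> = g" using pos by simp
        finally have "g = (1 / (s - \<gamma>)) *\<^sub>R w" by simp
        then have "g \<in> pos_hull ?G'" using wG' pos by (simp add: pos_hull_scale)
        then show False using notin by simp
      qed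
      then have "0 \<le> \<gamma> - s" by simp
      then have c1: "(\<gamma> - s) *\<^sub>R g \<in> \<sigma>" using cone_scale[OF rc g\<sigma>] by blast
      have c2: "w \<in> \<sigma>" using wG' sub' by blast
      have "w + (\<gamma> - s) *\<^sub>R g = 0" using eq by (simp add: algebra_simps)
      then have w0: "w = 0" using cone_pointed[OF rc c2 c1] by blast
      have a'\<sigma>: "a' \<in> \<sigma>" "b' \<in> \<sigma>" using aa(2) bb(2) sub' by blast+
      have s1: "(1 - u) *\<^sub>R a' \<in> \<sigma>" using cone_scale[OF rc a'\<sigma>(1)] u by simp
      have s2: "u *\<^sub>R b' \<in> \<sigma>" using cone_scale[OF rc a'\<sigma>(2)] u by simp
      have "(1 - u) *\<^sub>R a' + u *\<^sub>R b' = 0" using w0 unfolding w_def .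
      then have z1: "(1 - u) *\<^sub>R a' = 0" using cone_pointed[OF rc s1 s2] by blast
      then have a'0: "a' = 0" using u by simp
      have "u *\<^sub>R b' = 0" using \<open>(1 - u) *\<^sub>R a' + u *\<^sub>R b' = 0\<close> unfolding z1 by simp
      then have b'0: "b' = 0" using u by simp
      show "a \<in> T" using aa a'0 unfolding T_def by auto
      show "b \<in> T" using bb b'0 unfolding T_def by auto
    qed
    have gT: "g \<in> T" unfolding T_def by (intro CollectI exI[of _ 1]) simp
    then have TS: "T \<in> S" using fan_face[OF F \<sigma>S face] by blast
    have "T \<subseteq> span {g}" unfolding T_def by (auto simp: span_singleton)
    then have "dim T \<le> dim {g}" by (rule dim_mono)
    moreover have "dim {g} \<le> dim T" using gT by (intro dim_subset) simp
    ultimately have "dim T = 1" using g0 by simp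
    then have Tray: "T \<in> rays S" unfolding rays_def using TS by simp
    have "prim_gen N T \<in> T" "prim_gen N T \<noteq> 0" using ray_pg[OF L F Tray] by auto
    then obtain t where t: "prim_gen N T = t *\<^sub>R g" "t \<noteq> 0" unfolding T_def by auto
    have "prim_gen N T \<in> ?U" using Tray T\<sigma> by blast
    then have "(1 / t) *\<^sub>R prim_gen N T \<in> span ?U" by (intro span_scale span_base)
    then show "g \<in> span ?U" using t by simp
  qed
  have "\<sigma> \<subseteq> span G" using sG pos_hull_subset_span by blast
  also have "span G \<subseteq> span ?U" using GinU by (intro span_minimal) (auto simp: subspace_span)
  finally show ?thesis .
qed

lemma PL_det:
  fixes S :: "'a::euclidean_space set set"
  assumes L: "is_lattice N" and F: "is_fan N S" and f: "f \<in> PL N S" and g: "g \<in> PL N S"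
    and fg: "\<And>\<rho>. \<rho> \<in> rays S \<Longrightarrow> f (prim_gen N \<rho>) = g (prim_gen N \<rho>)"
    and \<sigma>S: "\<sigma> \<in> S" and x: "x \<in> \<sigma>"
  shows "f x = g x"
proof -
  obtain m where m: "m \<in> intlin N" "\<forall>y\<in>\<sigma>. f y = m y" using PLD[OF f \<sigma>S] by blast
  obtain m' where m': "m' \<in> intlin N" "\<forall>y\<in>\<sigma>. g y = m' y" using PLD[OF g \<sigma>S] by blast
  have lin: "linear (\<lambda>y. m y - m' y)" using intlinD(1)[OF intlin_diff[OF m(1) m'(1)]] .
  have z: "m y - m' y = 0" if yU: "y \<in> prim_gen N ` {\<rho>\<in>rays S. \<rho> \<subseteq> \<sigma>}" for y
  proof -
    obtain \<rho> where \<rho>: "\<rho> \<in> rays S" "\<rho> \<subseteq> \<sigma>" "y = prim_gen N \<rho>" using yU by blast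
    have "y \<in> \<sigma>" using ray_pg(1)[OF L F \<rho>(1)] \<rho> by blast
    then show ?thesis using m m' fg[OF \<rho>(1)] \<rho>(3) by simp
  qed
  have "m x - m' x = 0"
    using linear_eq_0_on_span[OF lin, of "prim_gen N ` {\<rho>\<in>rays S. \<rho> \<subseteq> \<sigma>}" x] z
      cone_span_rays[OF L F \<sigma>S] x by blast
  then show ?thesis using m m' x by simp
qed

lemma courant_prop:
  fixes S :: "'a::euclidean_space set set"
  assumes U: "unimodular_fan N S" and \<rho>0: "\<rho>0 \<in> rays S"
  shows "courant N S \<rho>0 \<in> PL N S" "courant N S \<rho>0 (prim_gen N \<rho>0) = 1"
    "\<And>\<rho>. \<rho> \<in> rays S \<Longrightarrow> \<rho> \<noteq> \<rho>0 \<Longrightarrow> courant N S \<rho>0 (prim_gen N \<rho>) = 0"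
proof -
  have L: "is_lattice N" and F: "is_fan N S" using unimodD[OF U] by auto
  obtain Bf where Bf: "\<And>\<sigma>. \<sigma> \<in> S \<Longrightarrow> zbasis N (Bf \<sigma>) \<and> prim_gen N ` {\<rho>\<in>rays S. \<rho> \<subseteq> \<sigma>} \<subseteq> Bf \<sigma>"
    using unimodD(3)[OF U] by metis
  define u0 where "u0 = prim_gen N \<rho>0"
  define \<delta> where "\<delta> b = (if b = u0 then 1 else (0::real))" for b
  have "\<forall>\<sigma>\<in>S. \<exists>m. linear m \<and> (\<forall>b\<in>Bf \<sigma>. m b = \<delta> b)"
  proof
    fix \<sigma> assume "\<sigma> \<in> S"
    then have "independent (Bf \<sigma>)" using Bf unfolding zbasis_def by blast
    then show "\<exists>m. linear m \<and> (\<forall>b\<in>Bf \<sigma>. m b = \<delta> b)" by (rule linear_independent_extend)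
  qed
  then obtain M where M: "\<And>\<sigma>. \<sigma> \<in> S \<Longrightarrow> linear (M \<sigma>) \<and> (\<forall>b\<in>Bf \<sigma>. M \<sigma> b = \<delta> b)" by metis
  have Mint: "M \<sigma> \<in> intlin N" if \<sigma>S: "\<sigma> \<in> S" for \<sigma>
    unfolding intlin_def
  proof (intro CollectI conjI ballI)
    have lin: "linear (M \<sigma>)" using M[OF \<sigma>S] by blast
    then show "linear (M \<sigma>)" .
    fix n assume "n \<in> N"
    then have "n \<in> int_span (Bf \<sigma>)" using Bf[OF \<sigma>S] unfolding zbasis_def by blast
    then obtain c where c: "n = (\<Sum>b\<in>Bf \<sigma>. of_int (c b) *\<^sub>R b)" unfolding int_span_def by blast
    have "M \<sigma> n = (\<Sum>b\<in>Bf \<sigma>. of_int (c b) * M \<sigma> b)"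
      unfolding c by (simp add: linear_sum[OF lin] linear_scale[OF lin])
    also have "\<dots> = (\<Sum>b\<in>Bf \<sigma>. of_int (c b) * \<delta> b)" using M[OF \<sigma>S] by simp
    also have "\<dots> \<in> \<int>" unfolding \<delta>_def by (intro Ints_sum) simp
    finally show "M \<sigma> n \<in> \<int>" .
  qed
  have Mvals: "M \<sigma> (prim_gen N \<rho>) = \<delta> (prim_gen N \<rho>)" if "\<sigma> \<in> S" "\<rho> \<in> rays S" "\<rho> \<subseteq> \<sigma>" for \<sigma> \<rho>
  proof -
    have "prim_gen N \<rho> \<in> Bf \<sigma>" using Bf[OF that(1)] that(2,3) by blast
    then show ?thesis using M[OF that(1)] by blast
  qed
  have agree: "M \<sigma> x = M \<sigma>' x" if \<sigma>: "\<sigma> \<in> S" "\<sigma>' \<in> S" "x \<in> \<sigma>" "x \<in> \<sigma>'" for \<sigma> \<sigma>' x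
  proof -
    have "(\<sigma> \<inter> \<sigma>') face_of \<sigma>" by (rule fan_inter[OF F \<sigma>(1,2)])
    moreover have "\<sigma> \<inter> \<sigma>' \<noteq> {}" using \<sigma> by blast
    ultimately have \<tau>S: "\<sigma> \<inter> \<sigma>' \<in> S" using fan_face[OF F \<sigma>(1)] by blast
    have lin: "linear (\<lambda>y. M \<sigma> y - M \<sigma>' y)" using M \<sigma>(1,2) by (blast intro: linear_compose_sub)
    have z: "M \<sigma> y - M \<sigma>' y = 0" if yU: "y \<in> prim_gen N ` {\<rho>\<in>rays S. \<rho> \<subseteq> \<sigma> \<inter> \<sigma>'}" for y
    proof -
      obtain \<rho> where \<rho>: "\<rho> \<in> rays S" "\<rho> \<subseteq> \<sigma> \<inter> \<sigma>'" "y = prim_gen N \<rho>" using yU by blast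
      show ?thesis using Mvals[OF \<sigma>(1) \<rho>(1)] Mvals[OF \<sigma>(2) \<rho>(1)] \<rho> by auto
    qed
    have "x \<in> \<sigma> \<inter> \<sigma>'" using \<sigma> by blast
    then have "M \<sigma> x - M \<sigma>' x = 0"
      using linear_eq_0_on_span[OF lin, of "prim_gen N ` {\<rho>\<in>rays S. \<rho> \<subseteq> \<sigma> \<inter> \<sigma>'}" x] z
        cone_span_rays[OF L F \<tau>S] by blast
    then show ?thesis by simp
  qed
  define g where "g x = M (SOME \<sigma>. \<sigma> \<in> S \<and> x \<in> \<sigma>) x" for x
  have gM: "g x = M \<sigma> x" if "\<sigma> \<in> S" "x \<in> \<sigma>" for \<sigma> x
  proof -
    have "(SOME \<sigma>. \<sigma> \<in> S \<and> x \<in> \<sigma>) \<in> S \<and> x \<in> (SOME \<sigma>. \<sigma> \<in> S \<and> x \<in> \<sigma>)"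
      by (rule someI[of _ \<sigma>]) (use that in simp)
    then show ?thesis unfolding g_def using agree that by blast
  qed
  have gPL: "g \<in> PL N S" unfolding PL_def using gM Mint by blast
  have gu: "g (prim_gen N \<rho>) = (if \<rho> = \<rho>0 then 1 else 0)" if \<rho>: "\<rho> \<in> rays S" for \<rho>
  proof -
    have \<rho>S: "\<rho> \<in> S" using raysD(1)[OF \<rho>] .
    have "g (prim_gen N \<rho>) = M \<rho> (prim_gen N \<rho>)" using gM[OF \<rho>S] ray_pg(1)[OF L F \<rho>] by blast
    also have "\<dots> = \<delta> (prim_gen N \<rho>)" using Mvals[OF \<rho>S \<rho>] by simp
    also have "\<dots> = (if \<rho> = \<rho>0 then 1 else 0)" unfolding \<delta>_def u0_def
      using ray_pg_inj[OF L F \<rho> \<rho>0] by auto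
    finally show ?thesis .
  qed
  have "\<exists>g. g \<in> PL N S \<and> g (prim_gen N \<rho>0) = 1 \<and> (\<forall>\<rho>'\<in>rays S. \<rho>' \<noteq> \<rho>0 \<longrightarrow> g (prim_gen N \<rho>') = 0)"
    using gPL gu \<rho>0 by (intro exI[of _ g]) auto
  then have "courant N S \<rho>0 \<in> PL N S \<and> courant N S \<rho>0 (prim_gen N \<rho>0) = 1 \<and>
      (\<forall>\<rho>'\<in>rays S. \<rho>' \<noteq> \<rho>0 \<longrightarrow> courant N S \<rho>0 (prim_gen N \<rho>') = 0)"
    unfolding courant_def by (rule someI_ex)
  then show "courant N S \<rho>0 \<in> PL N S" "courant N S \<rho>0 (prim_gen N \<rho>0) = 1"
    "\<And>\<rho>. \<rho> \<in> rays S \<Longrightarrow> \<rho> \<noteq> \<rho>0 \<Longrightarrow> courant N S \<rho>0 (prim_gen N \<rho>) = 0" by auto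
qed

definition sm0 :: "'a::euclidean_space set \<Rightarrow> 'a set \<Rightarrow> ('a \<Rightarrow> real) \<Rightarrow> ('a \<Rightarrow> real)" where
  "sm0 N \<rho> f = (SOME m. m \<in> intlin N \<and> (\<forall>x\<in>\<rho>. f x = m x))"

lemma sm0_prop:
  assumes "f \<in> PL N S" "\<rho> \<in> S"
  shows "sm0 N \<rho> f \<in> intlin N" "\<And>x. x \<in> \<rho> \<Longrightarrow> f x = sm0 N \<rho> f x"
proof -
  have "\<exists>m. m \<in> intlin N \<and> (\<forall>x\<in>\<rho>. f x = m x)" using PLD[OF assms] by blast
  then have "sm0 N \<rho> f \<in> intlin N \<and> (\<forall>x\<in>\<rho>. f x = sm0 N \<rho> f x)" unfolding sm0_def by (rule someI_ex)
  then show "sm0 N \<rho> f \<in> intlin N" "\<And>x. x \<in> \<rho> \<Longrightarrow> f x = sm0 N \<rho> f x" by auto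
qed

lemma star_fun_alt: "star_fun N S \<rho> f = (\<lambda>y. SOME v. \<exists>\<tau>\<in>S. \<rho> \<subseteq> \<tau> \<and> (\<exists>x\<in>\<tau>. perp_proj \<rho> x = y \<and> v = f x - sm0 N \<rho> f x))"
  unfolding star_fun_def sm0_def Let_def ..

lemma star_W_aux:
  fixes S :: "'a::euclidean_space set set"
  assumes L: "is_lattice N" and F: "is_fan N S" and \<rho>: "\<rho> \<in> rays S" and f: "f \<in> PL N S"
    and \<tau>: "\<tau> \<in> S" "\<rho> \<subseteq> \<tau>" "x1 \<in> \<tau>" and t: "0 \<le> t"
  shows "f (x1 + t *\<^sub>R prim_gen N \<rho>) - sm0 N \<rho> f (x1 + t *\<^sub>R prim_gen N \<rho>) = f x1 - sm0 N \<rho> f x1"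
proof -
  let ?u = "prim_gen N \<rho>"
  let ?m = "sm0 N \<rho> f"
  have \<rho>S: "\<rho> \<in> S" using raysD(1)[OF \<rho>] .
  have rc: "rat_cone N \<tau>" using fan_cone[OF F \<tau>(1)] .
  have u\<tau>: "?u \<in> \<tau>" using ray_pg(1)[OF L F \<rho>] \<tau>(2) by blast
  have x2: "x1 + t *\<^sub>R ?u \<in> \<tau>" using cone_add[OF rc \<tau>(3) cone_scale[OF rc u\<tau> t]] .
  obtain m where m: "m \<in> intlin N" "\<forall>y\<in>\<tau>. f y = m y" using PLD[OF f \<tau>(1)] by blast
  have lin: "linear (\<lambda>y. m y - ?m y)" using intlinD(1)[OF intlin_diff[OF m(1) sm0_prop(1)[OF f \<rho>S]]] .
  have "m ?u - ?m ?u = 0" using m(2) u\<tau> sm0_prop(2)[OF f \<rho>S, of ?u] ray_pg(1)[OF L F \<rho>] by simp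
  then have "m (x1 + t *\<^sub>R ?u) - ?m (x1 + t *\<^sub>R ?u) = m x1 - ?m x1"
    using linear_add[OF lin, of x1 "t *\<^sub>R ?u"] linear_scale[OF lin, of t ?u] by simp
  then show ?thesis using m(2) x2 \<tau>(3) by simp
qed

lemma star_W:
  fixes S :: "'a::euclidean_space set set"
  assumes L: "is_lattice N" and F: "is_fan N S" and \<rho>: "\<rho> \<in> rays S" and f: "f \<in> PL N S"
    and \<tau>1: "\<tau>1 \<in> S" "\<rho> \<subseteq> \<tau>1" "x1 \<in> \<tau>1" and \<tau>2: "\<tau>2 \<in> S" "\<rho> \<subseteq> \<tau>2" "x2 \<in> \<tau>2"
    and pp: "perp_proj \<rho> x1 = perp_proj \<rho> x2"
  shows "f x1 - sm0 N \<rho> f x1 = f x2 - sm0 N \<rho> f x2"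
proof -
  let ?u = "prim_gen N \<rho>"
  have "\<rho> \<subseteq> span {?u}" using ray_pg(4)[OF L F \<rho>] by (auto simp: span_singleton)
  then have "span \<rho> \<subseteq> span {?u}" by (metis span_mono span_span)
  then have "x1 - x2 \<in> span {?u}" using perp_proj_eq_span[OF pp] by blast
  then obtain c where c: "x1 - x2 = c *\<^sub>R ?u" by (auto simp: span_singleton)
  show ?thesis
  proof (cases "c \<le> 0")
    case True
    have "x2 = x1 + (- c) *\<^sub>R ?u" using c by (simp add: algebra_simps)
    then show ?thesis using star_W_aux[OF L F \<rho> f \<tau>1, of "- c"] True by simp
  next
    case False
    have "x1 = x2 + c *\<^sub>R ?u" using c by (simp add: algebra_simps)
    then show ?thesis using star_W_aux[OF L F \<rho> f \<tau>2, of c] False by simp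
  qed
qed

lemma star_fun_val:
  fixes S :: "'a::euclidean_space set set"
  assumes L: "is_lattice N" and F: "is_fan N S" and \<rho>: "\<rho> \<in> rays S" and f: "f \<in> PL N S"
    and \<tau>: "\<tau> \<in> S" "\<rho> \<subseteq> \<tau>" "x \<in> \<tau>"
  shows "star_fun N S \<rho> f (perp_proj \<rho> x) = f x - sm0 N \<rho> f x"
proof -
  let ?P = "\<lambda>v. \<exists>\<tau>\<in>S. \<rho> \<subseteq> \<tau> \<and> (\<exists>x'\<in>\<tau>. perp_proj \<rho> x' = perp_proj \<rho> x \<and> v = f x' - sm0 N \<rho> f x')"
  have "?P (f x - sm0 N \<rho> f x)" using \<tau> by blast
  then have "?P (SOME v. ?P v)" by (rule someI)
  then obtain \<tau>' x' where x': "\<tau>' \<in> S" "\<rho> \<subseteq> \<tau>'" "x' \<in> \<tau>'" "perp_proj \<rho> x' = perp_proj \<rho> x"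
    "(SOME v. ?P v) = f x' - sm0 N \<rho> f x'" by blast
  have "f x' - sm0 N \<rho> f x' = f x - sm0 N \<rho> f x"
    by (rule star_W[OF L F \<rho> f x'(1,2,3) \<tau> x'(4)])
  then show ?thesis unfolding star_fun_alt using x'(5) by simp
qed

lemma star_fun_PL:
  fixes S :: "'a::euclidean_space set set"
  assumes L: "is_lattice N" and F: "is_fan N S" and \<rho>: "\<rho> \<in> rays S" and f: "f \<in> PL N S"
  shows "star_fun N S \<rho> f \<in> PL (star_lattice N \<rho>) (star_fan S \<rho>)"
  unfolding PL_def
proof (intro CollectI ballI)
  have \<rho>S: "\<rho> \<in> S" using raysD(1)[OF \<rho>] .
  fix C assume "C \<in> star_fan S \<rho>"
  then obtain \<tau> \<tau>' where C: "C = perp_proj \<rho> ` \<tau>" "\<tau>' \<in> S" "\<rho> \<subseteq> \<tau>'" "\<tau> face_of \<tau>'"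
    unfolding star_fan_def by blast
  obtain m where m: "m \<in> intlin N" "\<forall>y\<in>\<tau>'. f y = m y" using PLD[OF f C(2)] by blast
  define Lm where "Lm y = m y - sm0 N \<rho> f y" for y
  have lin: "linear Lm" unfolding Lm_def using intlinD(1)[OF intlin_diff[OF m(1) sm0_prop(1)[OF f \<rho>S]]] .
  have van: "Lm a = 0" if "a \<in> \<rho>" for a
    using that C(3) m(2) sm0_prop(2)[OF f \<rho>S, of a] unfolding Lm_def by auto
  have LmP: "Lm (perp_proj \<rho> y) = Lm y" for y by (rule linear_vanish_proj[OF lin van])
  have "Lm \<in> intlin (star_lattice N \<rho>)" unfolding intlin_def
  proof (intro CollectI conjI ballI)
    show "linear Lm" by (rule lin)
    fix y assume "y \<in> star_lattice N \<rho>"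
    then obtain n where n: "n \<in> N" "y = perp_proj \<rho> n" unfolding star_lattice_def by blast
    have "Lm y = m n - sm0 N \<rho> f n" using LmP n(2) unfolding Lm_def by simp
    also have "\<dots> \<in> \<int>" using intlinD(2)[OF m(1) n(1)] intlinD(2)[OF sm0_prop(1)[OF f \<rho>S] n(1)] by (rule Ints_diff)
    finally show "Lm y \<in> \<int>" .
  qed
  moreover have "star_fun N S \<rho> f y = Lm y" if yC: "y \<in> C" for y
  proof -
    obtain x where x: "x \<in> \<tau>" "y = perp_proj \<rho> x" using yC C(1) by blast
    have x': "x \<in> \<tau>'" using face_of_imp_subset[OF C(4)] x(1) by blast
    have "star_fun N S \<rho> f y = f x - sm0 N \<rho> f x" unfolding x(2) by (rule star_fun_val[OF L F \<rho> f C(2,3) x'])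
    also have "\<dots> = Lm x" using m(2) x' unfolding Lm_def by simp
    also have "\<dots> = Lm y" using LmP x(2) by simp
    finally show ?thesis .
  qed
  ultimately show "\<exists>m\<in>intlin (star_lattice N \<rho>). \<forall>x\<in>C. star_fun N S \<rho> f x = m x" by blast
qed

lemma PL_int_val:
  fixes S :: "'a::euclidean_space set set"
  assumes "f \<in> PL N S" "\<sigma> \<in> S" "x \<in> \<sigma>" "x \<in> N" shows "f x \<in> \<int>"
proof -
  obtain m where "m \<in> intlin N" "\<forall>y\<in>\<sigma>. f y = m y" using PLD[OF assms(1,2)] by blast
  then show ?thesis using intlinD(2) assms(3,4) by simp
qed

lemma ehr_unique_aux:
  fixes N :: "'a::euclidean_space set"
  assumes "ehr_chi N S c"
  shows "\<forall>c'. ehr_chi N S c' \<longrightarrow> (\<forall>f\<in>PL N S. c f = c' f)"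
  using assms
proof (induction rule: ehr_chi.induct)
  case (1 N S chi)
  note U = 1(1) and inv = 1(2) and one = 1(3) and rec = 1(4)
  have L: "is_lattice N" and F: "is_fan N S" using unimodD[OF U] by auto
  show ?case
  proof (intro allI impI ballI)
    fix c' f assume c': "ehr_chi N S c'" and f: "f \<in> PL N S"
    from c' have "(\<forall>f\<in>PL N S. \<forall>g\<in>PL N S. (\<exists>m\<in>intlin N. \<forall>x\<in>\<Union> S. f x = g x + m x) \<longrightarrow> c' f = c' g)
      \<and> c' (\<lambda>x. 0) = 1
      \<and> (\<forall>\<rho>\<in>rays S. \<exists>chir. ehr_chi (star_lattice N \<rho>) (star_fan S \<rho>) chir \<and>
             (\<forall>f\<in>PL N S. c' f = c' (\<lambda>x. f x - courant N S \<rho> x) + chir (star_fun N S \<rho> f)))"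
      by (cases rule: ehr_chi.cases) auto
    then have inv': "\<forall>f\<in>PL N S. \<forall>g\<in>PL N S. (\<exists>m\<in>intlin N. \<forall>x\<in>\<Union> S. f x = g x + m x) \<longrightarrow> c' f = c' g"
      and one': "c' (\<lambda>x. 0) = 1"
      and rec': "\<forall>\<rho>\<in>rays S. \<exists>chir. ehr_chi (star_lattice N \<rho>) (star_fan S \<rho>) chir \<and>
             (\<forall>f\<in>PL N S. c' f = c' (\<lambda>x. f x - courant N S \<rho> x) + chir (star_fun N S \<rho> f))"
      by blast+
    define D where "D g = chi g - c' g" for g
    have step: "D g = D (\<lambda>x. g x - courant N S \<rho> x)" if g: "g \<in> PL N S" and \<rho>: "\<rho> \<in> rays S" for g \<rho>
    proof -
      obtain chir where chir: "ehr_chi (star_lattice N \<rho>) (star_fan S \<rho>) chir"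
        "\<forall>c''. ehr_chi (star_lattice N \<rho>) (star_fan S \<rho>) c'' \<longrightarrow>
            (\<forall>h\<in>PL (star_lattice N \<rho>) (star_fan S \<rho>). chir h = c'' h)"
        "\<forall>f\<in>PL N S. chi f = chi (\<lambda>x. f x - courant N S \<rho> x) + chir (star_fun N S \<rho> f)"
        using rec \<rho> by blast
      obtain chir' where chir': "ehr_chi (star_lattice N \<rho>) (star_fan S \<rho>) chir'"
        "\<forall>f\<in>PL N S. c' f = c' (\<lambda>x. f x - courant N S \<rho> x) + chir' (star_fun N S \<rho> f)"
        using rec' \<rho> by blast
      have "chir (star_fun N S \<rho> g) = chir' (star_fun N S \<rho> g)"
        using chir(2) chir'(1) star_fun_PL[OF L F \<rho> g] by blast
      then show ?thesis unfolding D_def using chir(3) chir'(2) g by simp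
    qed
    have PLc: "courant N S \<rho> \<in> PL N S" if "\<rho> \<in> rays S" for \<rho> using courant_prop(1)[OF U that] .
    have stepn: "D g = D (\<lambda>x. g x - of_nat n * courant N S \<rho> x)" if g: "g \<in> PL N S" and \<rho>: "\<rho> \<in> rays S" for g \<rho> n
    proof (induction n)
      case 0 then show ?case by simp
    next
      case (Suc n)
      have gn: "(\<lambda>x. g x - of_nat n * courant N S \<rho> x) \<in> PL N S"
        using PL_diff[OF g PL_intmult[OF PLc[OF \<rho>], of "int n"]] by simp
      have "D (\<lambda>x. g x - of_nat (Suc n) * courant N S \<rho> x) =
            D (\<lambda>x. (g x - of_nat n * courant N S \<rho> x) - courant N S \<rho> x)"
        by (simp add: algebra_simps)
      also have "\<dots> = D (\<lambda>x. g x - of_nat n * courant N S \<rho> x)" using step[OF gn \<rho>] by simp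
      finally show ?case using Suc by simp
    qed
    have stepi: "D g = D (\<lambda>x. g x - of_int k * courant N S \<rho> x)" if g: "g \<in> PL N S" and \<rho>: "\<rho> \<in> rays S" for g \<rho> k
    proof (cases "0 \<le> k")
      case True
      then show ?thesis using stepn[OF g \<rho>, of "nat k"] by simp
    next
      case False
      define n where "n = nat (- k)"
      have kn: "of_int k = - (of_nat n :: real)" using False unfolding n_def by simp
      have gn: "(\<lambda>x. g x + of_nat n * courant N S \<rho> x) \<in> PL N S"
        using PL_add[OF g PL_intmult[OF PLc[OF \<rho>], of "int n"]] by simp
      have "D (\<lambda>x. g x + of_nat n * courant N S \<rho> x) = D (\<lambda>x. (g x + of_nat n * courant N S \<rho> x) - of_nat n * courant N S \<rho> x)"
        by (rule stepn[OF gn \<rho>])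
      then show ?thesis unfolding kn by simp
    qed
    define a where "a \<rho> = \<lfloor>f (prim_gen N \<rho>)\<rfloor>" for \<rho>
    define FR where "FR R x = f x - (\<Sum>\<rho>\<in>R. of_int (a \<rho>) * courant N S \<rho> x)" for R x
    have finR: "finite (rays S)" using F unfolding is_fan_def rays_def by auto
    have FRP: "FR R \<in> PL N S \<and> D f = D (FR R)" if "finite R" "R \<subseteq> rays S" for R
      using that
    proof (induction R rule: finite_induct)
      case empty
      have "FR {} = f" unfolding FR_def by simp
      then show ?case using f by simp
    next
      case (insert \<rho> R)
      have \<rho>: "\<rho> \<in> rays S" using insert by blast
      have IH: "FR R \<in> PL N S" "D f = D (FR R)" using insert by auto
      have e: "FR (insert \<rho> R) = (\<lambda>x. FR R x - of_int (a \<rho>) * courant N S \<rho> x)"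
        unfolding FR_def using insert(1,2) by (simp add: algebra_simps)
      show ?case unfolding e using PL_diff[OF IH(1) PL_intmult[OF PLc[OF \<rho>]]] stepi[OF IH(1) \<rho>] IH(2) by simp
    qed
    have F1: "FR (rays S) \<in> PL N S" "D f = D (FR (rays S))" using FRP[OF finR] by auto
    have F0: "FR (rays S) (prim_gen N \<rho>') = 0" if \<rho>': "\<rho>' \<in> rays S" for \<rho>'
    proof -
      have "(\<Sum>\<rho>\<in>rays S. of_int (a \<rho>) * courant N S \<rho> (prim_gen N \<rho>')) =
            (\<Sum>\<rho>\<in>rays S. if \<rho> = \<rho>' then of_int (a \<rho>) else 0)"
      proof (rule sum.cong)
        fix \<rho> assume \<rho>: "\<rho> \<in> rays S"
        show "of_int (a \<rho>) * courant N S \<rho> (prim_gen N \<rho>') = (if \<rho> = \<rho>' then of_int (a \<rho>) else 0)"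
          using courant_prop(2)[OF U \<rho>] courant_prop(3)[OF U \<rho> \<rho>'] by auto
      qed simp
      also have "\<dots> = of_int (a \<rho>')" using \<rho>' finR by simp
      also have "\<dots> = f (prim_gen N \<rho>')"
      proof -
        have "f (prim_gen N \<rho>') \<in> \<int>"
          using PL_int_val[OF f raysD(1)[OF \<rho>'] ray_pg(1)[OF L F \<rho>'] ray_pg(2)[OF L F \<rho>']] .
        then show ?thesis unfolding a_def by (elim Ints_cases) simp
      qed
      finally show ?thesis unfolding FR_def by simp
    qed
    have FZ: "\<forall>x\<in>\<Union>S. FR (rays S) x = 0 + 0"
    proof
      fix x assume "x \<in> \<Union>S"
      then obtain \<sigma> where "\<sigma> \<in> S" "x \<in> \<sigma>" by blast
      then show "FR (rays S) x = 0 + 0" using PL_det[OF L F F1(1) PL_0, of "\<sigma>" x] F0 by simp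
    qed
    have ex0: "\<exists>m\<in>intlin N. \<forall>x\<in>\<Union>S. FR (rays S) x = 0 + m x"
      using FZ by (intro bexI[of _ "\<lambda>x. 0"] intlin_0) simp
    have "chi (FR (rays S)) = chi (\<lambda>x. 0)"
      using inv[rule_format, OF F1(1) PL_0 ex0] .
    moreover have "c' (FR (rays S)) = c' (\<lambda>x. 0)"
      using inv'[rule_format, OF F1(1) PL_0 ex0] .
    ultimately have "D (FR (rays S)) = 0" unfolding D_def using one one' by simp
    then show "chi f = c' f" using F1(2) unfolding D_def by simp
  qed
qed

lemma ehr_unique:
  fixes N :: "'a::euclidean_space set"
  assumes "ehr_chi N S c" "ehr_chi N S c'" "f \<in> PL N S"
  shows "c f = c' f"
  using ehr_unique_aux[OF assms(1)] assms(2,3) by blast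

section \<open>Products: linear algebra\<close>

lemma sum_cross:
  assumes "finite B1" "finite B2" "(0::'b::zero) \<notin> B2"
  shows "(\<Sum>p\<in>B1 \<times> {0::'b} \<union> {0::'a::zero} \<times> B2. F p) = (\<Sum>b\<in>B1. F (b, 0)) + (\<Sum>b\<in>B2. F (0, b))"
proof -
  have d: "(B1 \<times> {0}) \<inter> ({0} \<times> B2) = {}" using assms(3) by auto
  have "(\<Sum>p\<in>B1 \<times> {0} \<union> {0} \<times> B2. F p) = (\<Sum>p\<in>B1 \<times> {0}. F p) + (\<Sum>p\<in>{0} \<times> B2. F p)"
    by (rule sum.union_disjoint) (use assms d in auto)
  moreover have "(\<Sum>p\<in>B1 \<times> {0}. F p) = (\<Sum>b\<in>B1. F (b, 0))"
  proof -
    have e: "B1 \<times> {0} = (\<lambda>b. (b, 0)) ` B1" by auto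
    have i: "inj_on (\<lambda>b. (b, 0::'b)) B1" by (auto simp: inj_on_def)
    show ?thesis unfolding e sum.reindex[OF i] by simp
  qed
  moreover have "(\<Sum>p\<in>{0} \<times> B2. F p) = (\<Sum>b\<in>B2. F (0, b))"
  proof -
    have e: "{0} \<times> B2 = (\<lambda>b. (0, b)) ` B2" by auto
    have i: "inj_on (\<lambda>b. (0::'a, b)) B2" by (auto simp: inj_on_def)
    show ?thesis unfolding e sum.reindex[OF i] by simp
  qed
  ultimately show ?thesis by simp
qed

lemma sum_pair1: "(\<Sum>b\<in>B. (f b, 0::'b::comm_monoid_add)) = (sum f B, 0)"
  by (induction B rule: infinite_finite_induct) (simp_all add: zero_prod_def)

lemma sum_pair2: "(\<Sum>b\<in>B. (0::'a::comm_monoid_add, f b)) = (0, sum f B)"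
  by (induction B rule: infinite_finite_induct) (simp_all add: zero_prod_def)

lemma linear_pair1: "linear (\<lambda>x. (x, 0::'b::real_vector))"
  by (rule linearI) (simp_all add: scaleR_prod_def zero_prod_def)

lemma linear_pair2: "linear (\<lambda>x. (0::'a::real_vector, x))"
  by (rule linearI) (simp_all add: scaleR_prod_def zero_prod_def)

lemma indep_coeffs:
  assumes "finite B" "independent B" "(\<Sum>b\<in>B. u b *\<^sub>R b) = 0" "b \<in> B"
  shows "u b = 0"
  using assms dependent_finite[OF assms(1)] by blast

lemma zbasis_Times:
  fixes B1 :: "'a::euclidean_space set" and B2 :: "'b::euclidean_space set"
  assumes z1: "zbasis N1 B1" and z2: "zbasis N2 B2"
  shows "zbasis (N1 \<times> N2) (B1 \<times> {0} \<union> {0} \<times> B2)"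
proof -
  have f1: "finite B1" and i1: "independent B1" and n1: "N1 = int_span B1" using z1 unfolding zbasis_def by auto
  have f2: "finite B2" and i2: "independent B2" and n2: "N2 = int_span B2" using z2 unfolding zbasis_def by auto
  have nz1: "0 \<notin> B1" using i1 dependent_zero by blast
  have nz2: "0 \<notin> B2" using i2 dependent_zero by blast
  let ?B = "B1 \<times> {0} \<union> {0} \<times> B2"
  have fB: "finite ?B" using f1 f2 by simp
  have sc: "(\<Sum>p\<in>?B. F p) = (\<Sum>b\<in>B1. F (b, 0)) + (\<Sum>b\<in>B2. F (0, b))" for F :: "'a \<times> 'b \<Rightarrow> 'a \<times> 'b"
    by (rule sum_cross[OF f1 f2 nz2])
  have ind: "independent ?B"
  proof -
    have "\<forall>v\<in>?B. u v = 0" if u: "(\<Sum>v\<in>?B. u v *\<^sub>R v) = 0" for u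
    proof -
      have "(\<Sum>b\<in>B1. u (b, 0) *\<^sub>R (b, 0)) + (\<Sum>b\<in>B2. u (0, b) *\<^sub>R (0, b)) = (0 :: 'a \<times> 'b)"
        using u sc[of "\<lambda>v. u v *\<^sub>R v"] by simp
      then have "((\<Sum>b\<in>B1. u (b, 0) *\<^sub>R b), (\<Sum>b\<in>B2. u (0, b) *\<^sub>R b)) = (0 :: 'a \<times> 'b)"
        by (simp add: sum_pair1 sum_pair2)
      then have e1: "(\<Sum>b\<in>B1. u (b, 0) *\<^sub>R b) = 0" and e2: "(\<Sum>b\<in>B2. u (0, b) *\<^sub>R b) = 0"
        by (simp_all add: zero_prod_def)
      show ?thesis
      proof
        fix v assume "v \<in> ?B"
        then consider b where "b \<in> B1" "v = (b, 0)" | b where "b \<in> B2" "v = (0, b)" by blast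
        then show "u v = 0"
        proof cases
          case 1 then show ?thesis using indep_coeffs[OF f1 i1 e1] by simp
        next
          case 2 then show ?thesis using indep_coeffs[OF f2 i2 e2] by simp
        qed
      qed
    qed
    then show ?thesis using dependent_finite[OF fB] by blast
  qed
  have "N1 \<times> N2 = int_span ?B"
  proof (intro equalityI subsetI)
    fix z assume "z \<in> N1 \<times> N2"
    then obtain x y where z: "z = (x, y)" "x \<in> int_span B1" "y \<in> int_span B2" using n1 n2 by auto
    obtain c where c: "x = (\<Sum>b\<in>B1. of_int (c b) *\<^sub>R b)" using z(2) unfolding int_span_def by auto
    obtain d where d: "y = (\<Sum>b\<in>B2. of_int (d b) *\<^sub>R b)" using z(3) unfolding int_span_def by auto
    define e where "e p = (if snd p = 0 then c (fst p) else d (snd p))" for p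
    have "(\<Sum>p\<in>?B. of_int (e p) *\<^sub>R p) = (\<Sum>b\<in>B1. of_int (c b) *\<^sub>R (b, 0)) + (\<Sum>b\<in>B2. of_int (d b) *\<^sub>R (0, b))"
    proof -
      have "(\<Sum>b\<in>B2. of_int (e (0, b)) *\<^sub>R (0::'a, b)) = (\<Sum>b\<in>B2. of_int (d b) *\<^sub>R (0, b))"
        by (rule sum.cong) (use nz2 in \<open>auto simp: e_def\<close>)
      then show ?thesis using sc[of "\<lambda>p. of_int (e p) *\<^sub>R p"] by (simp add: e_def)
    qed
    also have "\<dots> = z" unfolding z(1) c d by (simp add: sum_pair1 sum_pair2)
    finally show "z \<in> int_span ?B" by (rule int_spanI[OF sym])
  next
    fix z assume "z \<in> int_span ?B"
    then obtain e where e: "z = (\<Sum>p\<in>?B. of_int (e p) *\<^sub>R p)" unfolding int_span_def by auto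
    have "z = (\<Sum>b\<in>B1. of_int (e (b, 0)) *\<^sub>R (b, 0)) + (\<Sum>b\<in>B2. of_int (e (0, b)) *\<^sub>R (0, b))"
      using e sc[of "\<lambda>p. of_int (e p) *\<^sub>R p"] by simp
    also have "\<dots> = ((\<Sum>b\<in>B1. of_int (e (b, 0)) *\<^sub>R b), (\<Sum>b\<in>B2. of_int (e (0, b)) *\<^sub>R b))"
      by (simp add: sum_pair1 sum_pair2)
    finally have zz: "z = ((\<Sum>b\<in>B1. of_int (e (b, 0)) *\<^sub>R b), (\<Sum>b\<in>B2. of_int (e (0, b)) *\<^sub>R b))" .
    have "(\<Sum>b\<in>B1. of_int (e (b, 0)) *\<^sub>R b) \<in> int_span B1" by (rule int_spanI) (rule refl)
    moreover have "(\<Sum>b\<in>B2. of_int (e (0, b)) *\<^sub>R b) \<in> int_span B2" by (rule int_spanI) (rule refl)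
    ultimately show "z \<in> N1 \<times> N2" unfolding n1 n2 zz by simp
  qed
  then show ?thesis unfolding zbasis_def using fB ind by blast
qed

lemma lattice_Times: "is_lattice N1 \<Longrightarrow> is_lattice N2 \<Longrightarrow> is_lattice (N1 \<times> N2)"
  unfolding is_lattice_def using zbasis_Times by blast

section \<open>Products of cones\<close>

lemma pos_hull_pair1: assumes "x \<in> pos_hull G" shows "(x, 0::'b::real_vector) \<in> pos_hull (G \<times> {0})"
proof -
  obtain c where c: "x = (\<Sum>g\<in>G. c g *\<^sub>R g)" "\<forall>g. 0 \<le> c g" using assms unfolding pos_hull_def by auto
  have "G \<times> {0} = (\<lambda>b. (b, 0::'b)) ` G" by auto
  moreover have "inj_on (\<lambda>b. (b, 0::'b)) G" by (auto simp: inj_on_def)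
  ultimately have "(\<Sum>p\<in>G \<times> {0}. c (fst p) *\<^sub>R p) = (\<Sum>b\<in>G. c b *\<^sub>R (b, 0::'b))" by (simp add: sum.reindex)
  also have "\<dots> = (x, 0)" unfolding c by (simp add: sum_pair1)
  finally show ?thesis using c(2) by (intro pos_hullI[where c="\<lambda>p. c (fst p)"]) auto
qed

lemma pos_hull_pair2: assumes "x \<in> pos_hull G" shows "(0::'a::real_vector, x) \<in> pos_hull ({0} \<times> G)"
proof -
  obtain c where c: "x = (\<Sum>g\<in>G. c g *\<^sub>R g)" "\<forall>g. 0 \<le> c g" using assms unfolding pos_hull_def by auto
  have "{0} \<times> G = (\<lambda>b. (0::'a, b)) ` G" by auto
  moreover have "inj_on (\<lambda>b. (0::'a, b)) G" by (auto simp: inj_on_def)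
  ultimately have "(\<Sum>p\<in>{0} \<times> G. c (snd p) *\<^sub>R p) = (\<Sum>b\<in>G. c b *\<^sub>R (0::'a, b))" by (simp add: sum.reindex)
  also have "\<dots> = (0, x)" unfolding c by (simp add: sum_pair2)
  finally show ?thesis using c(2) by (intro pos_hullI[where c="\<lambda>p. c (snd p)"]) auto
qed

lemma pos_hull_Times:
  fixes G1 :: "'a::real_vector set" and G2 :: "'b::real_vector set"
  assumes f1: "finite G1" and f2: "finite G2"
  shows "pos_hull G1 \<times> pos_hull G2 = pos_hull (G1 \<times> {0} \<union> {0} \<times> G2)"
proof (intro equalityI subsetI)
  let ?G = "G1 \<times> {0} \<union> {0} \<times> G2"
  have fG: "finite ?G" using f1 f2 by simp
  fix z assume "z \<in> pos_hull G1 \<times> pos_hull G2"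
  then obtain x y where z: "z = (x, y)" "x \<in> pos_hull G1" "y \<in> pos_hull G2" by auto
  have "(x, 0) \<in> pos_hull ?G" using pos_hull_pair1[OF z(2)] pos_hull_mono[OF fG, of "G1 \<times> {0}"] by blast
  moreover have "(0, y) \<in> pos_hull ?G" using pos_hull_pair2[OF z(3)] pos_hull_mono[OF fG, of "{0} \<times> G2"] by blast
  ultimately have "(x, 0) + (0, y) \<in> pos_hull ?G" by (rule pos_hull_add)
  then show "z \<in> pos_hull ?G" using z(1) by simp
next
  let ?G = "G1 \<times> {0} \<union> {0} \<times> G2"
  fix z assume "z \<in> pos_hull ?G"
  then obtain c where c: "z = (\<Sum>p\<in>?G. c p *\<^sub>R p)" "\<forall>p. 0 \<le> c p" unfolding pos_hull_def by auto
  have "fst z = (\<Sum>p\<in>?G. c p *\<^sub>R fst p)" unfolding c(1) by (simp add: fst_sum)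
  also have "\<dots> \<in> pos_hull G1"
  proof (rule pos_hull_sum)
    show "finite ?G" using f1 f2 by simp
    fix p assume "p \<in> ?G"
    then have "fst p \<in> pos_hull G1" using pos_hull_base[OF f1] pos_hull_0 by auto
    then show "c p *\<^sub>R fst p \<in> pos_hull G1" using c(2) pos_hull_scale by blast
  qed
  finally have 1: "fst z \<in> pos_hull G1" .
  have "snd z = (\<Sum>p\<in>?G. c p *\<^sub>R snd p)" unfolding c(1) by (simp add: snd_sum)
  also have "\<dots> \<in> pos_hull G2"
  proof (rule pos_hull_sum)
    show "finite ?G" using f1 f2 by simp
    fix p assume "p \<in> ?G"
    then have "snd p \<in> pos_hull G2" using pos_hull_base[OF f2] pos_hull_0 by auto
    then show "c p *\<^sub>R snd p \<in> pos_hull G2" using c(2) pos_hull_scale by blast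
  qed
  finally have 2: "snd z \<in> pos_hull G2" .
  show "z \<in> pos_hull G1 \<times> pos_hull G2" using 1 2 by (simp add: mem_Times_iff)
qed

lemma rat_cone_Times:
  fixes N1 :: "'a::euclidean_space set" and N2 :: "'b::euclidean_space set"
  assumes r1: "rat_cone N1 \<sigma>1" and r2: "rat_cone N2 \<sigma>2" and z1: "0 \<in> N1" and z2: "0 \<in> N2"
  shows "rat_cone (N1 \<times> N2) (\<sigma>1 \<times> \<sigma>2)"
proof -
  obtain G1 where G1: "finite G1" "G1 \<subseteq> N1" "\<sigma>1 = pos_hull G1" using rat_coneD(1)[OF r1] by blast
  obtain G2 where G2: "finite G2" "G2 \<subseteq> N2" "\<sigma>2 = pos_hull G2" using rat_coneD(1)[OF r2] by blast
  have "\<sigma>1 \<times> \<sigma>2 = pos_hull (G1 \<times> {0} \<union> {0} \<times> G2)" using pos_hull_Times[OF G1(1) G2(1)] G1(3) G2(3) by simp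
  moreover have "finite (G1 \<times> {0} \<union> {0} \<times> G2)" using G1 G2 by simp
  moreover have "G1 \<times> {0} \<union> {0} \<times> G2 \<subseteq> N1 \<times> N2" using G1 G2 z1 z2 by auto
  moreover have "\<forall>x. x \<in> \<sigma>1 \<times> \<sigma>2 \<and> - x \<in> \<sigma>1 \<times> \<sigma>2 \<longrightarrow> x = 0"
  proof (intro allI impI)
    fix x :: "'a \<times> 'b" assume x: "x \<in> \<sigma>1 \<times> \<sigma>2 \<and> - x \<in> \<sigma>1 \<times> \<sigma>2"
    have a: "fst x \<in> \<sigma>1" "- fst x \<in> \<sigma>1" using x by (auto simp: mem_Times_iff)
    have b: "snd x \<in> \<sigma>2" "- snd x \<in> \<sigma>2" using x by (auto simp: mem_Times_iff)
    have "fst x = 0" by (rule rat_coneD(2)[OF r1 a])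
    moreover have "snd x = 0" by (rule rat_coneD(2)[OF r2 b])
    ultimately show "x = 0" by (simp add: prod_eq_iff)
  qed
  ultimately show ?thesis unfolding rat_cone_def by (intro conjI exI[of _ "G1 \<times> {0} \<union> {0} \<times> G2"]) simp_all
qed

lemma zero_face: assumes rc: "rat_cone N \<sigma>" shows "{0} face_of \<sigma>"
  unfolding face_of_def
proof (intro conjI ballI impI)
  show "{0} \<subseteq> \<sigma>" using cone_0[OF rc] by simp
  show "convex {0}" by simp
  fix a b x assume a: "a \<in> \<sigma>" and b: "b \<in> \<sigma>" and x: "x \<in> {0}" and seg: "x \<in> open_segment a b"
  obtain u where u: "0 < u" "u < 1" "x = (1 - u) *\<^sub>R a + u *\<^sub>R b" using seg by (auto simp: in_segment)
  have s1: "(1 - u) *\<^sub>R a \<in> \<sigma>" using cone_scale[OF rc a] u by simp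
  have s2: "u *\<^sub>R b \<in> \<sigma>" using cone_scale[OF rc b] u by simp
  have e: "(1 - u) *\<^sub>R a + u *\<^sub>R b = 0" using u(3) x by simp
  then have z1: "(1 - u) *\<^sub>R a = 0" using cone_pointed[OF rc s1 s2] by blast
  then have "a = 0" using u by simp
  moreover have "u *\<^sub>R b = 0" using e unfolding z1 by simp
  then have "b = 0" using u by simp
  ultimately show "a \<in> {0}" "b \<in> {0}" by auto
qed

lemma zero_in_fan: assumes F: "is_fan N S" shows "{0} \<in> S"
proof -
  obtain \<sigma> where \<sigma>: "\<sigma> \<in> S" using F unfolding is_fan_def by blast
  show ?thesis using fan_face[OF F \<sigma> zero_face[OF fan_cone[OF F \<sigma>]]] by simp
qed

lemma fan_0: "is_fan N S \<Longrightarrow> \<sigma> \<in> S \<Longrightarrow> 0 \<in> \<sigma>"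
  using cone_0 fan_cone by blast

lemma prod_fanE: assumes "\<sigma> \<in> prod_fan S1 S2" obtains \<sigma>1 \<sigma>2 where "\<sigma>1 \<in> S1" "\<sigma>2 \<in> S2" "\<sigma> = \<sigma>1 \<times> \<sigma>2"
  using assms unfolding prod_fan_def by blast

lemma prod_fanI: "\<sigma>1 \<in> S1 \<Longrightarrow> \<sigma>2 \<in> S2 \<Longrightarrow> \<sigma>1 \<times> \<sigma>2 \<in> prod_fan S1 S2"
  unfolding prod_fan_def by blast

lemma is_fan_Times:
  fixes N1 :: "'a::euclidean_space set" and N2 :: "'b::euclidean_space set"
  assumes F1: "is_fan N1 S1" and F2: "is_fan N2 S2" and z1: "0 \<in> N1" and z2: "0 \<in> N2"
  shows "is_fan (N1 \<times> N2) (prod_fan S1 S2)"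
  unfolding is_fan_def
proof (intro conjI ballI allI impI)
  have "prod_fan S1 S2 = (\<lambda>(a, b). a \<times> b) ` (S1 \<times> S2)" unfolding prod_fan_def by auto
  then show "finite (prod_fan S1 S2)" using F1 F2 unfolding is_fan_def by simp
  show "prod_fan S1 S2 \<noteq> {}" using zero_in_fan[OF F1] zero_in_fan[OF F2] prod_fanI by blast
  fix \<sigma> assume "\<sigma> \<in> prod_fan S1 S2"
  then obtain \<sigma>1 \<sigma>2 where s: "\<sigma>1 \<in> S1" "\<sigma>2 \<in> S2" "\<sigma> = \<sigma>1 \<times> \<sigma>2" by (rule prod_fanE)
  show "rat_cone (N1 \<times> N2) \<sigma>" unfolding s(3) by (rule rat_cone_Times[OF fan_cone[OF F1 s(1)] fan_cone[OF F2 s(2)] z1 z2])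
  {
    fix \<tau> assume "\<tau> face_of \<sigma> \<and> \<tau> \<noteq> {}"
    then obtain F F' where FF: "F face_of \<sigma>1" "F' face_of \<sigma>2" "\<tau> = F \<times> F'" "\<tau> \<noteq> {}"
      unfolding s(3) face_of_Times_decomp by blast
    then have "F \<noteq> {}" "F' \<noteq> {}" by auto
    then have "F \<in> S1" "F' \<in> S2" using fan_face[OF F1 s(1) FF(1)] fan_face[OF F2 s(2) FF(2)] by auto
    then show "\<tau> \<in> prod_fan S1 S2" using FF(3) prod_fanI by blast
  }
  fix \<tau> assume "\<tau> \<in> prod_fan S1 S2"
  then obtain \<tau>1 \<tau>2 where t: "\<tau>1 \<in> S1" "\<tau>2 \<in> S2" "\<tau> = \<tau>1 \<times> \<tau>2" by (rule prod_fanE)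
  have e: "\<sigma> \<inter> \<tau> = (\<sigma>1 \<inter> \<tau>1) \<times> (\<sigma>2 \<inter> \<tau>2)" unfolding s(3) t(3) by (rule Times_Int_Times)
  have "((\<sigma>1 \<inter> \<tau>1) \<times> (\<sigma>2 \<inter> \<tau>2)) face_of (\<sigma>1 \<times> \<sigma>2)"
    using fan_inter[OF F1 s(1) t(1)] fan_inter[OF F2 s(2) t(2)] by (rule face_of_Times)
  then show "(\<sigma> \<inter> \<tau>) face_of \<sigma>" using e s(3) by simp
  have "(\<tau>1 \<inter> \<sigma>1) face_of \<tau>1" "(\<tau>2 \<inter> \<sigma>2) face_of \<tau>2"
    using fan_inter[OF F1 t(1) s(1)] fan_inter[OF F2 t(2) s(2)] by auto
  then have "((\<tau>1 \<inter> \<sigma>1) \<times> (\<tau>2 \<inter> \<sigma>2)) face_of (\<tau>1 \<times> \<tau>2)" by (rule face_of_Times)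
  moreover have "\<sigma> \<inter> \<tau> = (\<tau>1 \<inter> \<sigma>1) \<times> (\<tau>2 \<inter> \<sigma>2)" using e by (simp add: Int_commute)
  ultimately show "(\<sigma> \<inter> \<tau>) face_of \<tau>" using t(3) by simp
qed

lemma span_Times_0:
  fixes A :: "'a::euclidean_space set" and B :: "'b::euclidean_space set"
  assumes "0 \<in> A" "0 \<in> B"
  shows "span (A \<times> B) = span A \<times> span B"
proof
  show "span (A \<times> B) \<subseteq> span A \<times> span B"
    by (rule span_minimal) (auto intro: span_base subspace_Times subspace_span)
  show "span A \<times> span B \<subseteq> span (A \<times> B)"
  proof
    fix z assume "z \<in> span A \<times> span B"
    then obtain a b where z: "z = (a, b)" "a \<in> span A" "b \<in> span B" by auto
    have h1: "(a, 0::'b) \<in> span ((\<lambda>x. (x, 0::'b)) ` A)" using z(2) linear_span_image[OF linear_pair1, of A] by blast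
    have h2: "(\<lambda>x. (x, 0::'b)) ` A = A \<times> {0::'b}" by auto
    have h3: "(a, 0::'b) \<in> span (A \<times> {0::'b})" using h1 unfolding h2 .
    have h4: "span (A \<times> {0::'b}) \<subseteq> span (A \<times> B)" using assms by (intro span_mono) auto
    have k1: "(0::'a, b) \<in> span ((\<lambda>x. (0::'a, x)) ` B)" using z(3) linear_span_image[OF linear_pair2, of B] by blast
    have k2: "(\<lambda>x. (0::'a, x)) ` B = {0::'a} \<times> B" by auto
    have k3: "(0::'a, b) \<in> span ({0::'a} \<times> B)" using k1 unfolding k2 .
    have k4: "span ({0::'a} \<times> B) \<subseteq> span (A \<times> B)" using assms by (intro span_mono) auto
    have "(a, 0::'b) + (0::'a, b) \<in> span (A \<times> B)" using h3 h4 k3 k4 by (blast intro: span_add)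
    then show "z \<in> span (A \<times> B)" using z(1) by simp
  qed
qed

lemma dim_Times_0:
  fixes A :: "'a::euclidean_space set" and B :: "'b::euclidean_space set"
  assumes "0 \<in> A" "0 \<in> B"
  shows "dim (A \<times> B) = dim A + dim B"
proof -
  have "dim (A \<times> B) = dim (span (A \<times> B))" by simp
  also have "\<dots> = dim (span A \<times> span B)" using span_Times_0[OF assms] by simp
  also have "\<dots> = dim (span A) + dim (span B)" by (rule dim_Times) (simp_all add: subspace_span)
  finally show ?thesis by simp
qed

lemma rays_prod:
  fixes N1 :: "'a::euclidean_space set" and N2 :: "'b::euclidean_space set"
  assumes F1: "is_fan N1 S1" and F2: "is_fan N2 S2"
  shows "\<rho> \<in> rays (prod_fan S1 S2) \<longleftrightarrow> (\<exists>\<rho>1\<in>rays S1. \<rho> = \<rho>1 \<times> {0}) \<or> (\<exists>\<rho>2\<in>rays S2. \<rho> = {0} \<times> \<rho>2)"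
proof
  assume "\<rho> \<in> rays (prod_fan S1 S2)"
  then have \<rho>: "\<rho> \<in> prod_fan S1 S2" "dim \<rho> = 1" unfolding rays_def by auto
  then obtain \<sigma>1 \<sigma>2 where s: "\<sigma>1 \<in> S1" "\<sigma>2 \<in> S2" "\<rho> = \<sigma>1 \<times> \<sigma>2" by (blast elim: prod_fanE)
  have z: "0 \<in> \<sigma>1" "0 \<in> \<sigma>2" using fan_0[OF F1 s(1)] fan_0[OF F2 s(2)] .
  have d: "dim \<sigma>1 + dim \<sigma>2 = 1" using \<rho>(2) dim_Times_0[OF z] s(3) by simp
  show "(\<exists>\<rho>1\<in>rays S1. \<rho> = \<rho>1 \<times> {0}) \<or> (\<exists>\<rho>2\<in>rays S2. \<rho> = {0} \<times> \<rho>2)"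
  proof (cases "dim \<sigma>2 = 0")
    case True
    then have "\<sigma>2 \<subseteq> {0}" by (simp only: dim_eq_0)
    then have "\<sigma>2 = {0}" using z by auto
    moreover have "\<sigma>1 \<in> rays S1" using s(1) d True unfolding rays_def by simp
    ultimately show ?thesis using s(3) by blast
  next
    case False
    then have d1: "dim \<sigma>1 = 0" using d by linarith
    then have "\<sigma>1 \<subseteq> {0}" by (simp only: dim_eq_0)
    then have "\<sigma>1 = {0}" using z by auto
    moreover have "dim \<sigma>2 = 1" using d d1 by simp
    then have "\<sigma>2 \<in> rays S2" using s(2) unfolding rays_def by simp
    ultimately show ?thesis using s(3) by blast
  qed
next
  assume "(\<exists>\<rho>1\<in>rays S1. \<rho> = \<rho>1 \<times> {0}) \<or> (\<exists>\<rho>2\<in>rays S2. \<rho> = {0} \<times> \<rho>2)"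
  then show "\<rho> \<in> rays (prod_fan S1 S2)"
  proof
    assume "\<exists>\<rho>1\<in>rays S1. \<rho> = \<rho>1 \<times> {0}"
    then obtain \<rho>1 where r: "\<rho>1 \<in> rays S1" "\<rho> = \<rho>1 \<times> {0}" by blast
    have "\<rho> \<in> prod_fan S1 S2" using r raysD(1)[OF r(1)] zero_in_fan[OF F2] prod_fanI by blast
    moreover have "dim \<rho> = 1" using r dim_Times_0[of \<rho>1 "{0}"] fan_0[OF F1 raysD(1)[OF r(1)]] raysD(2)[OF r(1)] by simp
    ultimately show ?thesis unfolding rays_def by simp
  next
    assume "\<exists>\<rho>2\<in>rays S2. \<rho> = {0} \<times> \<rho>2"
    then obtain \<rho>2 where r: "\<rho>2 \<in> rays S2" "\<rho> = {0} \<times> \<rho>2" by blast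
    have "\<rho> \<in> prod_fan S1 S2" using r raysD(1)[OF r(1)] zero_in_fan[OF F1] prod_fanI by blast
    moreover have "dim \<rho> = 1" using r dim_Times_0[of "{0}" \<rho>2] fan_0[OF F2 raysD(1)[OF r(1)]] raysD(2)[OF r(1)] by simp
    ultimately show ?thesis unfolding rays_def by simp
  qed
qed

lemma prim_gen_prod1:
  fixes N1 :: "'a::euclidean_space set" and N2 :: "'b::euclidean_space set"
  assumes L1: "is_lattice N1" and F1: "is_fan N1 S1" and r: "\<rho>1 \<in> rays S1" and z2: "0 \<in> N2"
  shows "prim_gen (N1 \<times> N2) (\<rho>1 \<times> {0}) = (prim_gen N1 \<rho>1, 0)"
proof (rule prim_gen_is_pg)
  have pg: "is_pg N1 \<rho>1 (prim_gen N1 \<rho>1)"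
    by (rule prim_gen_prop(1)[OF L1 fan_cone[OF F1 raysD(1)[OF r]] raysD(2)[OF r]])
  show "is_pg (N1 \<times> N2) (\<rho>1 \<times> {0}) (prim_gen N1 \<rho>1, 0)"
    unfolding is_pg_def
  proof (intro conjI ballI)
    show "(prim_gen N1 \<rho>1, 0) \<in> \<rho>1 \<times> {0} \<inter> N1 \<times> N2" using pg z2 unfolding is_pg_def by auto
    show "(prim_gen N1 \<rho>1, 0) \<noteq> 0" using pg unfolding is_pg_def by (simp add: zero_prod_def)
    fix v assume "v \<in> \<rho>1 \<times> {0} \<inter> N1 \<times> N2"
    then have v: "fst v \<in> \<rho>1 \<inter> N1" "snd v = 0" by auto
    then obtain k :: nat where "fst v = real k *\<^sub>R prim_gen N1 \<rho>1" using pg unfolding is_pg_def by blast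
    then have "v = real k *\<^sub>R (prim_gen N1 \<rho>1, 0)" using v(2) by (simp add: prod_eq_iff)
    then show "\<exists>k::nat. v = real k *\<^sub>R (prim_gen N1 \<rho>1, 0)" by blast
  qed
qed

lemma prim_gen_prod2:
  fixes N1 :: "'a::euclidean_space set" and N2 :: "'b::euclidean_space set"
  assumes L2: "is_lattice N2" and F2: "is_fan N2 S2" and r: "\<rho>2 \<in> rays S2" and z1: "0 \<in> N1"
  shows "prim_gen (N1 \<times> N2) ({0} \<times> \<rho>2) = (0, prim_gen N2 \<rho>2)"
proof (rule prim_gen_is_pg)
  have pg: "is_pg N2 \<rho>2 (prim_gen N2 \<rho>2)"
    by (rule prim_gen_prop(1)[OF L2 fan_cone[OF F2 raysD(1)[OF r]] raysD(2)[OF r]])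
  show "is_pg (N1 \<times> N2) ({0} \<times> \<rho>2) (0, prim_gen N2 \<rho>2)"
    unfolding is_pg_def
  proof (intro conjI ballI)
    show "(0, prim_gen N2 \<rho>2) \<in> {0} \<times> \<rho>2 \<inter> N1 \<times> N2" using pg z1 unfolding is_pg_def by auto
    show "(0, prim_gen N2 \<rho>2) \<noteq> 0" using pg unfolding is_pg_def by (simp add: zero_prod_def)
    fix v assume "v \<in> {0} \<times> \<rho>2 \<inter> N1 \<times> N2"
    then have v: "snd v \<in> \<rho>2 \<inter> N2" "fst v = 0" by auto
    then obtain k :: nat where "snd v = real k *\<^sub>R prim_gen N2 \<rho>2" using pg unfolding is_pg_def by blast
    then have "v = real k *\<^sub>R (0, prim_gen N2 \<rho>2)" using v(2) by (simp add: prod_eq_iff)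
    then show "\<exists>k::nat. v = real k *\<^sub>R (0, prim_gen N2 \<rho>2)" by blast
  qed
qed

lemma unimod_prod:
  fixes N1 :: "'a::euclidean_space set" and N2 :: "'b::euclidean_space set"
  assumes U1: "unimodular_fan N1 S1" and U2: "unimodular_fan N2 S2"
  shows "unimodular_fan (N1 \<times> N2) (prod_fan S1 S2)"
proof -
  have L1: "is_lattice N1" and F1: "is_fan N1 S1" using unimodD[OF U1] by auto
  have L2: "is_lattice N2" and F2: "is_fan N2 S2" using unimodD[OF U2] by auto
  have z1: "0 \<in> N1" and z2: "0 \<in> N2" using lattice_0 L1 L2 by auto
  have "\<exists>B. zbasis (N1 \<times> N2) B \<and> prim_gen (N1 \<times> N2) ` {\<rho>\<in>rays (prod_fan S1 S2). \<rho> \<subseteq> \<sigma>} \<subseteq> B"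
    if \<sigma>: "\<sigma> \<in> prod_fan S1 S2" for \<sigma>
  proof -
    obtain \<sigma>1 \<sigma>2 where s: "\<sigma>1 \<in> S1" "\<sigma>2 \<in> S2" "\<sigma> = \<sigma>1 \<times> \<sigma>2" using \<sigma> by (rule prod_fanE)
    obtain B1 where B1: "zbasis N1 B1" "prim_gen N1 ` {\<rho>\<in>rays S1. \<rho> \<subseteq> \<sigma>1} \<subseteq> B1" using unimodD(3)[OF U1] s(1) by blast
    obtain B2 where B2: "zbasis N2 B2" "prim_gen N2 ` {\<rho>\<in>rays S2. \<rho> \<subseteq> \<sigma>2} \<subseteq> B2" using unimodD(3)[OF U2] s(2) by blast
    have "prim_gen (N1 \<times> N2) ` {\<rho>\<in>rays (prod_fan S1 S2). \<rho> \<subseteq> \<sigma>} \<subseteq> B1 \<times> {0} \<union> {0} \<times> B2"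
    proof
      fix p assume "p \<in> prim_gen (N1 \<times> N2) ` {\<rho>\<in>rays (prod_fan S1 S2). \<rho> \<subseteq> \<sigma>}"
      then obtain \<rho> where \<rho>: "\<rho> \<in> rays (prod_fan S1 S2)" "\<rho> \<subseteq> \<sigma>" "p = prim_gen (N1 \<times> N2) \<rho>" by blast
      from \<rho>(1) consider \<rho>1 where "\<rho>1 \<in> rays S1" "\<rho> = \<rho>1 \<times> {0}" | \<rho>2 where "\<rho>2 \<in> rays S2" "\<rho> = {0} \<times> \<rho>2"
        unfolding rays_prod[OF F1 F2] by blast
      then show "p \<in> B1 \<times> {0} \<union> {0} \<times> B2"
      proof cases
        case 1
        have "\<rho>1 \<subseteq> \<sigma>1" using \<rho>(2) 1(2) s(3) by (auto simp: Times_subset_cancel2)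
        then have "prim_gen N1 \<rho>1 \<in> B1" using B1(2) 1(1) by blast
        then show ?thesis using \<rho>(3) 1 prim_gen_prod1[OF L1 F1 1(1) z2] by simp
      next
        case 2
        have "\<rho>2 \<subseteq> \<sigma>2" using \<rho>(2) 2(2) s(3) by auto
        then have "prim_gen N2 \<rho>2 \<in> B2" using B2(2) 2(1) by blast
        then show ?thesis using \<rho>(3) 2 prim_gen_prod2[OF L2 F2 2(1) z1] by simp
      qed
    qed
    then show ?thesis using zbasis_Times[OF B1(1) B2(1)] by blast
  qed
  then show ?thesis unfolding unimodular_fan_def
    using lattice_Times[OF L1 L2] is_fan_Times[OF F1 F2 z1 z2] by blast
qed

lemma perp_proj_Times1:
  fixes A :: "'a::euclidean_space set"
  shows "perp_proj (A \<times> {0::'b::euclidean_space}) z = (perp_proj A (fst z), snd z)"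
proof (rule perp_proj_eqI)
  have h1: "span ((\<lambda>v. (v, 0::'b)) ` A) = (\<lambda>v. (v, 0::'b)) ` span A" by (rule linear_span_image[OF linear_pair1])
  have h2: "(\<lambda>v. (v, 0::'b)) ` A = A \<times> {0}" by auto
  have "fst z - perp_proj A (fst z) \<in> span A" using perp_proj_char by blast
  then have "(fst z - perp_proj A (fst z), 0::'b) \<in> span (A \<times> {0})" using h1 h2 by auto
  moreover have "z - (perp_proj A (fst z), snd z) = (fst z - perp_proj A (fst z), 0::'b)" by (simp add: prod_eq_iff)
  ultimately show "z - (perp_proj A (fst z), snd z) \<in> span (A \<times> {0})" by simp
  show "\<forall>a\<in>A \<times> {0}. a \<bullet> (perp_proj A (fst z), snd z) = 0"
    using perp_proj_char[of "fst z" A] by (auto simp: inner_Pair)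
qed

lemma perp_proj_Times2:
  fixes A :: "'b::euclidean_space set"
  shows "perp_proj ({0::'a::euclidean_space} \<times> A) z = (fst z, perp_proj A (snd z))"
proof (rule perp_proj_eqI)
  have h1: "span ((\<lambda>v. (0::'a, v)) ` A) = (\<lambda>v. (0::'a, v)) ` span A" by (rule linear_span_image[OF linear_pair2])
  have h2: "(\<lambda>v. (0::'a, v)) ` A = {0} \<times> A" by auto
  have "snd z - perp_proj A (snd z) \<in> span A" using perp_proj_char by blast
  then have "(0::'a, snd z - perp_proj A (snd z)) \<in> span ({0} \<times> A)" using h1 h2 by auto
  moreover have "z - (fst z, perp_proj A (snd z)) = (0::'a, snd z - perp_proj A (snd z))" by (simp add: prod_eq_iff)
  ultimately show "z - (fst z, perp_proj A (snd z)) \<in> span ({0} \<times> A)" by simp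
  show "\<forall>a\<in>{0} \<times> A. a \<bullet> (fst z, perp_proj A (snd z)) = 0"
    using perp_proj_char[of "snd z" A] by (auto simp: inner_Pair)
qed

lemma image_pp1: "(\<lambda>z. (p (fst z), snd z)) ` (A \<times> B) = p ` A \<times> B"
  by force
lemma image_pp2: "(\<lambda>z. (fst z, p (snd z))) ` (A \<times> B) = A \<times> p ` B"
  by force

lemma star_lattice_Times1:
  fixes N1 :: "'a::euclidean_space set" and N2 :: "'b::euclidean_space set"
  shows "star_lattice (N1 \<times> N2) (\<rho>1 \<times> {0}) = star_lattice N1 \<rho>1 \<times> N2"
  unfolding star_lattice_def perp_proj_Times1 image_pp1 ..

lemma star_lattice_Times2:
  fixes N1 :: "'a::euclidean_space set" and N2 :: "'b::euclidean_space set"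
  shows "star_lattice (N1 \<times> N2) ({0} \<times> \<rho>2) = N1 \<times> star_lattice N2 \<rho>2"
  unfolding star_lattice_def perp_proj_Times2 image_pp2 ..

lemma star_fan_Times1:
  fixes N1 :: "'a::euclidean_space set" and N2 :: "'b::euclidean_space set"
  assumes F1: "is_fan N1 S1" and F2: "is_fan N2 S2" and r: "\<rho>1 \<in> rays S1"
  shows "star_fan (prod_fan S1 S2) (\<rho>1 \<times> {0}) = prod_fan (star_fan S1 \<rho>1) S2"
proof (intro equalityI subsetI)
  fix C assume "C \<in> star_fan (prod_fan S1 S2) (\<rho>1 \<times> {0})"
  then obtain \<tau> \<tau>' where C: "C = perp_proj (\<rho>1 \<times> {0}) ` \<tau>" "\<tau>' \<in> prod_fan S1 S2" "\<rho>1 \<times> {0} \<subseteq> \<tau>'"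
    "\<tau> face_of \<tau>'" "\<tau> \<noteq> {}" unfolding star_fan_def by blast
  obtain \<sigma>1 \<sigma>2 where s: "\<sigma>1 \<in> S1" "\<sigma>2 \<in> S2" "\<tau>' = \<sigma>1 \<times> \<sigma>2" using C(2) by (rule prod_fanE)
  have r1: "\<rho>1 \<subseteq> \<sigma>1" using C(3) s(3) by auto
  obtain F F' where FF: "F face_of \<sigma>1" "F' face_of \<sigma>2" "\<tau> = F \<times> F'" using C(4) s(3) face_of_Times_decomp by blast
  have ne: "F \<noteq> {}" "F' \<noteq> {}" using C(5) FF(3) by auto
  have "perp_proj \<rho>1 ` F \<in> star_fan S1 \<rho>1" unfolding star_fan_def using s(1) r1 FF(1) ne(1) by blast
  moreover have "F' \<in> S2" using fan_face[OF F2 s(2) FF(2) ne(2)] .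
  moreover have "C = perp_proj \<rho>1 ` F \<times> F'" unfolding C(1) FF(3) perp_proj_Times1 image_pp1 ..
  ultimately show "C \<in> prod_fan (star_fan S1 \<rho>1) S2" using prod_fanI by blast
next
  fix C assume "C \<in> prod_fan (star_fan S1 \<rho>1) S2"
  then obtain A \<tau>2 where C: "A \<in> star_fan S1 \<rho>1" "\<tau>2 \<in> S2" "C = A \<times> \<tau>2" by (rule prod_fanE)
  obtain F \<sigma>1 where A: "A = perp_proj \<rho>1 ` F" "\<sigma>1 \<in> S1" "\<rho>1 \<subseteq> \<sigma>1" "F face_of \<sigma>1" "F \<noteq> {}"
    using C(1) unfolding star_fan_def by blast
  have z2: "0 \<in> \<tau>2" using fan_0[OF F2 C(2)] .
  have "\<sigma>1 \<times> \<tau>2 \<in> prod_fan S1 S2" using A(2) C(2) by (rule prod_fanI)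
  moreover have "\<rho>1 \<times> {0} \<subseteq> \<sigma>1 \<times> \<tau>2" using A(3) z2 by auto
  moreover have "(F \<times> \<tau>2) face_of (\<sigma>1 \<times> \<tau>2)"
    using A(4) face_of_refl[OF cone_convex[OF fan_cone[OF F2 C(2)]]] by (rule face_of_Times)
  moreover have "F \<times> \<tau>2 \<noteq> {}" using A(5) z2 by auto
  moreover have "C = perp_proj (\<rho>1 \<times> {0}) ` (F \<times> \<tau>2)" unfolding C(3) A(1) perp_proj_Times1 image_pp1 ..
  ultimately show "C \<in> star_fan (prod_fan S1 S2) (\<rho>1 \<times> {0})" unfolding star_fan_def by blast
qed

lemma star_fan_Times2:
  fixes N1 :: "'a::euclidean_space set" and N2 :: "'b::euclidean_space set"
  assumes F1: "is_fan N1 S1" and F2: "is_fan N2 S2" and r: "\<rho>2 \<in> rays S2"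
  shows "star_fan (prod_fan S1 S2) ({0} \<times> \<rho>2) = prod_fan S1 (star_fan S2 \<rho>2)"
proof (intro equalityI subsetI)
  fix C assume "C \<in> star_fan (prod_fan S1 S2) ({0} \<times> \<rho>2)"
  then obtain \<tau> \<tau>' where C: "C = perp_proj ({0} \<times> \<rho>2) ` \<tau>" "\<tau>' \<in> prod_fan S1 S2" "{0} \<times> \<rho>2 \<subseteq> \<tau>'"
    "\<tau> face_of \<tau>'" "\<tau> \<noteq> {}" unfolding star_fan_def by blast
  obtain \<sigma>1 \<sigma>2 where s: "\<sigma>1 \<in> S1" "\<sigma>2 \<in> S2" "\<tau>' = \<sigma>1 \<times> \<sigma>2" using C(2) by (rule prod_fanE)
  have r2: "\<rho>2 \<subseteq> \<sigma>2" using C(3) s(3) by auto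
  obtain F F' where FF: "F face_of \<sigma>1" "F' face_of \<sigma>2" "\<tau> = F \<times> F'" using C(4) s(3) face_of_Times_decomp by blast
  have ne: "F \<noteq> {}" "F' \<noteq> {}" using C(5) FF(3) by auto
  have "perp_proj \<rho>2 ` F' \<in> star_fan S2 \<rho>2" unfolding star_fan_def using s(2) r2 FF(2) ne(2) by blast
  moreover have "F \<in> S1" using fan_face[OF F1 s(1) FF(1) ne(1)] .
  moreover have "C = F \<times> perp_proj \<rho>2 ` F'" unfolding C(1) FF(3) perp_proj_Times2 image_pp2 ..
  ultimately show "C \<in> prod_fan S1 (star_fan S2 \<rho>2)" using prod_fanI by blast
next
  fix C assume "C \<in> prod_fan S1 (star_fan S2 \<rho>2)"
  then obtain \<tau>1 A where C: "\<tau>1 \<in> S1" "A \<in> star_fan S2 \<rho>2" "C = \<tau>1 \<times> A" by (rule prod_fanE)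
  obtain F \<sigma>2 where A: "A = perp_proj \<rho>2 ` F" "\<sigma>2 \<in> S2" "\<rho>2 \<subseteq> \<sigma>2" "F face_of \<sigma>2" "F \<noteq> {}"
    using C(2) unfolding star_fan_def by blast
  have z1: "0 \<in> \<tau>1" using fan_0[OF F1 C(1)] .
  have "\<tau>1 \<times> \<sigma>2 \<in> prod_fan S1 S2" using C(1) A(2) by (rule prod_fanI)
  moreover have "{0} \<times> \<rho>2 \<subseteq> \<tau>1 \<times> \<sigma>2" using A(3) z1 by auto
  moreover have "(\<tau>1 \<times> F) face_of (\<tau>1 \<times> \<sigma>2)"
    using face_of_refl[OF cone_convex[OF fan_cone[OF F1 C(1)]]] A(4) by (rule face_of_Times)
  moreover have "\<tau>1 \<times> F \<noteq> {}" using A(5) z1 by auto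
  moreover have "C = perp_proj ({0} \<times> \<rho>2) ` (\<tau>1 \<times> F)" unfolding C(3) A(1) perp_proj_Times2 image_pp2 ..
  ultimately show "C \<in> star_fan (prod_fan S1 S2) ({0} \<times> \<rho>2)" unfolding star_fan_def by blast
qed

lemma intlin_fst: assumes "m \<in> intlin N1" shows "(\<lambda>z. m (fst z)) \<in> intlin (N1 \<times> N2)"
proof -
  have "linear (m \<circ> fst)" using linear_compose[OF linear_fst intlinD(1)[OF assms]] .
  then have "linear (\<lambda>z. m (fst z))" by (simp add: o_def)
  then show ?thesis using intlinD(2)[OF assms] unfolding intlin_def by auto
qed

lemma intlin_snd: assumes "m \<in> intlin N2" shows "(\<lambda>z. m (snd z)) \<in> intlin (N1 \<times> N2)"
proof -
  have "linear (m \<circ> snd)" using linear_compose[OF linear_snd intlinD(1)[OF assms]] .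
  then have "linear (\<lambda>z. m (snd z))" by (simp add: o_def)
  then show ?thesis using intlinD(2)[OF assms] unfolding intlin_def by auto
qed

lemma intlin_res1:
  fixes N1 :: "'a::euclidean_space set" and N2 :: "'b::euclidean_space set"
  assumes "m \<in> intlin (N1 \<times> N2)" "0 \<in> N2" shows "(\<lambda>x. m (x, 0)) \<in> intlin N1"
proof -
  have "linear (m \<circ> (\<lambda>x. (x, 0::'b)))" using linear_compose[OF linear_pair1 intlinD(1)[OF assms(1)]] .
  then have "linear (\<lambda>x. m (x, 0))" by (simp add: o_def)
  then show ?thesis using intlinD(2)[OF assms(1)] assms(2) unfolding intlin_def by auto
qed

lemma intlin_res2:
  fixes N1 :: "'a::euclidean_space set" and N2 :: "'b::euclidean_space set"
  assumes "m \<in> intlin (N1 \<times> N2)" "0 \<in> N1" shows "(\<lambda>y. m (0, y)) \<in> intlin N2"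
proof -
  have "linear (m \<circ> (\<lambda>x. (0::'a, x)))" using linear_compose[OF linear_pair2 intlinD(1)[OF assms(1)]] .
  then have "linear (\<lambda>y. m (0, y))" by (simp add: o_def)
  then show ?thesis using intlinD(2)[OF assms(1)] assms(2) unfolding intlin_def by auto
qed

lemma intlin_neg: "m \<in> intlin N \<Longrightarrow> (\<lambda>x. - m x) \<in> intlin N"
  using intlin_diff[OF intlin_0] by simp

lemma PL_res1:
  fixes N1 :: "'a::euclidean_space set" and N2 :: "'b::euclidean_space set"
  assumes f: "f \<in> PL (N1 \<times> N2) (prod_fan S1 S2)" and z: "0 \<in> N2" and s2: "\<sigma>2 \<in> S2" "0 \<in> \<sigma>2"
  shows "(\<lambda>x. f (x, 0)) \<in> PL N1 S1"
  unfolding PL_def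
proof (intro CollectI ballI)
  fix \<sigma>1 assume "\<sigma>1 \<in> S1"
  then have "\<sigma>1 \<times> \<sigma>2 \<in> prod_fan S1 S2" using s2 by (intro prod_fanI)
  then obtain m where m: "m \<in> intlin (N1 \<times> N2)" "\<forall>z\<in>\<sigma>1 \<times> \<sigma>2. f z = m z" using PLD[OF f] by blast
  show "\<exists>m\<in>intlin N1. \<forall>x\<in>\<sigma>1. f (x, 0) = m x"
    using m s2(2) by (intro bexI[OF _ intlin_res1[OF m(1) z]]) auto
qed

lemma PL_res2:
  fixes N1 :: "'a::euclidean_space set" and N2 :: "'b::euclidean_space set"
  assumes f: "f \<in> PL (N1 \<times> N2) (prod_fan S1 S2)" and z: "0 \<in> N1" and s1: "\<sigma>1 \<in> S1" "0 \<in> \<sigma>1"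
  shows "(\<lambda>y. f (0, y)) \<in> PL N2 S2"
  unfolding PL_def
proof (intro CollectI ballI)
  fix \<sigma>2 assume "\<sigma>2 \<in> S2"
  then have "\<sigma>1 \<times> \<sigma>2 \<in> prod_fan S1 S2" using s1 by (intro prod_fanI)
  then obtain m where m: "m \<in> intlin (N1 \<times> N2)" "\<forall>z\<in>\<sigma>1 \<times> \<sigma>2. f z = m z" using PLD[OF f] by blast
  show "\<exists>m\<in>intlin N2. \<forall>y\<in>\<sigma>2. f (0, y) = m y"
    using m s1(2) by (intro bexI[OF _ intlin_res2[OF m(1) z]]) auto
qed

lemma PL_prod:
  fixes N1 :: "'a::euclidean_space set" and N2 :: "'b::euclidean_space set"
  assumes f1: "f1 \<in> PL N1 S1" and f2: "f2 \<in> PL N2 S2"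
  shows "(\<lambda>z. f1 (fst z) + f2 (snd z)) \<in> PL (N1 \<times> N2) (prod_fan S1 S2)"
  unfolding PL_def
proof (intro CollectI ballI)
  fix \<sigma> assume "\<sigma> \<in> prod_fan S1 S2"
  then obtain \<sigma>1 \<sigma>2 where s: "\<sigma>1 \<in> S1" "\<sigma>2 \<in> S2" "\<sigma> = \<sigma>1 \<times> \<sigma>2" by (rule prod_fanE)
  obtain m1 where m1: "m1 \<in> intlin N1" "\<forall>x\<in>\<sigma>1. f1 x = m1 x" using PLD[OF f1 s(1)] by blast
  obtain m2 where m2: "m2 \<in> intlin N2" "\<forall>x\<in>\<sigma>2. f2 x = m2 x" using PLD[OF f2 s(2)] by blast
  have "(\<lambda>z. m1 (fst z) + m2 (snd z)) \<in> intlin (N1 \<times> N2)"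
    by (rule intlin_add[OF intlin_fst[OF m1(1)] intlin_snd[OF m2(1)]])
  moreover have "\<forall>z\<in>\<sigma>. f1 (fst z) + f2 (snd z) = m1 (fst z) + m2 (snd z)" using s(3) m1 m2 by auto
  ultimately show "\<exists>m\<in>intlin (N1 \<times> N2). \<forall>z\<in>\<sigma>. f1 (fst z) + f2 (snd z) = m z"
    by (intro bexI[of _ "\<lambda>z. m1 (fst z) + m2 (snd z)"]) auto
qed

lemma PL_at_0: assumes F: "is_fan N S" and f: "f \<in> PL N S" shows "f 0 = 0"
proof -
  obtain \<sigma> where \<sigma>: "\<sigma> \<in> S" using F unfolding is_fan_def by blast
  obtain m where m: "m \<in> intlin N" "\<forall>x\<in>\<sigma>. f x = m x" using PLD[OF f \<sigma>] by blast
  show ?thesis using m fan_0[OF F \<sigma>] linear_0[OF intlinD(1)[OF m(1)]] by simp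
qed

section \<open>Courant functions on products\<close>

lemma courant_prod1:
  fixes N1 :: "'a::euclidean_space set" and N2 :: "'b::euclidean_space set"
  assumes U1: "unimodular_fan N1 S1" and U2: "unimodular_fan N2 S2" and r: "\<rho>1 \<in> rays S1"
    and z: "z \<in> \<sigma>" "\<sigma> \<in> prod_fan S1 S2"
  shows "courant (N1 \<times> N2) (prod_fan S1 S2) (\<rho>1 \<times> {0}) z = courant N1 S1 \<rho>1 (fst z)"
proof -
  have L1: "is_lattice N1" and F1: "is_fan N1 S1" using unimodD[OF U1] by auto
  have L2: "is_lattice N2" and F2: "is_fan N2 S2" using unimodD[OF U2] by auto
  have z1: "0 \<in> N1" and z2: "0 \<in> N2" using lattice_0 L1 L2 by auto
  have UP: "unimodular_fan (N1 \<times> N2) (prod_fan S1 S2)" by (rule unimod_prod[OF U1 U2])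
  have LP: "is_lattice (N1 \<times> N2)" and FP: "is_fan (N1 \<times> N2) (prod_fan S1 S2)" using unimodD[OF UP] by auto
  have rP: "\<rho>1 \<times> {0} \<in> rays (prod_fan S1 S2)" unfolding rays_prod[OF F1 F2] using r by blast
  let ?g = "courant (N1 \<times> N2) (prod_fan S1 S2) (\<rho>1 \<times> {0})"
  let ?c = "courant N1 S1 \<rho>1"
  have c1: "?c \<in> PL N1 S1" using courant_prop(1)[OF U1 r] .
  have g0: "(\<lambda>z. ?c (fst z) + (\<lambda>y. 0) (snd z)) \<in> PL (N1 \<times> N2) (prod_fan S1 S2)"
    by (rule PL_prod[OF c1 PL_0])
  then have g0': "(\<lambda>z. ?c (fst z)) \<in> PL (N1 \<times> N2) (prod_fan S1 S2)" by simp
  have c00: "?c 0 = 0" by (rule PL_at_0[OF F1 c1])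
  have "?g z = ?c (fst z)"
  proof (rule PL_det[OF LP FP courant_prop(1)[OF UP rP] g0' _ z(2,1)])
    fix \<rho> assume \<rho>: "\<rho> \<in> rays (prod_fan S1 S2)"
    then consider \<rho>1' where "\<rho>1' \<in> rays S1" "\<rho> = \<rho>1' \<times> {0}" | \<rho>2 where "\<rho>2 \<in> rays S2" "\<rho> = {0} \<times> \<rho>2"
      unfolding rays_prod[OF F1 F2] by blast
    then show "?g (prim_gen (N1 \<times> N2) \<rho>) = ?c (fst (prim_gen (N1 \<times> N2) \<rho>))"
    proof cases
      case 1
      have pg: "prim_gen (N1 \<times> N2) \<rho> = (prim_gen N1 \<rho>1', 0)" using prim_gen_prod1[OF L1 F1 1(1) z2] 1(2) by simp
      show ?thesis
      proof (cases "\<rho>1' = \<rho>1")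
        case True
        then show ?thesis using courant_prop(2)[OF UP rP] courant_prop(2)[OF U1 r] 1(2) pg by simp
      next
        case False
        then have "\<rho> \<noteq> \<rho>1 \<times> {0}" using 1(2) by (simp add: Times_eq_cancel2)
        then show ?thesis using courant_prop(3)[OF UP rP \<rho>] courant_prop(3)[OF U1 r 1(1) False] pg by simp
      qed
    next
      case 2
      have pg: "prim_gen (N1 \<times> N2) \<rho> = (0, prim_gen N2 \<rho>2)" using prim_gen_prod2[OF L2 F2 2(1) z1] 2(2) by simp
      have "(prim_gen N1 \<rho>1, 0) \<in> \<rho>1 \<times> {0}" using ray_pg(1)[OF L1 F1 r] by simp
      moreover have "(prim_gen N1 \<rho>1, 0) \<notin> {0} \<times> \<rho>2" using ray_pg(3)[OF L1 F1 r] by simp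
      ultimately have "\<rho> \<noteq> \<rho>1 \<times> {0}" using 2(2) by blast
      then show ?thesis using courant_prop(3)[OF UP rP \<rho>] pg c00 by simp
    qed
  qed
  then show ?thesis .
qed

lemma courant_prod2:
  fixes N1 :: "'a::euclidean_space set" and N2 :: "'b::euclidean_space set"
  assumes U1: "unimodular_fan N1 S1" and U2: "unimodular_fan N2 S2" and r: "\<rho>2 \<in> rays S2"
    and z: "z \<in> \<sigma>" "\<sigma> \<in> prod_fan S1 S2"
  shows "courant (N1 \<times> N2) (prod_fan S1 S2) ({0} \<times> \<rho>2) z = courant N2 S2 \<rho>2 (snd z)"
proof -
  have L1: "is_lattice N1" and F1: "is_fan N1 S1" using unimodD[OF U1] by auto
  have L2: "is_lattice N2" and F2: "is_fan N2 S2" using unimodD[OF U2] by auto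
  have z1: "0 \<in> N1" and z2: "0 \<in> N2" using lattice_0 L1 L2 by auto
  have UP: "unimodular_fan (N1 \<times> N2) (prod_fan S1 S2)" by (rule unimod_prod[OF U1 U2])
  have LP: "is_lattice (N1 \<times> N2)" and FP: "is_fan (N1 \<times> N2) (prod_fan S1 S2)" using unimodD[OF UP] by auto
  have rP: "{0} \<times> \<rho>2 \<in> rays (prod_fan S1 S2)" unfolding rays_prod[OF F1 F2] using r by blast
  let ?g = "courant (N1 \<times> N2) (prod_fan S1 S2) ({0} \<times> \<rho>2)"
  let ?c = "courant N2 S2 \<rho>2"
  have c2: "?c \<in> PL N2 S2" using courant_prop(1)[OF U2 r] .
  have g0: "(\<lambda>z. (\<lambda>x. 0) (fst z) + ?c (snd z)) \<in> PL (N1 \<times> N2) (prod_fan S1 S2)"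
    by (rule PL_prod[OF PL_0 c2])
  then have g0': "(\<lambda>z. ?c (snd z)) \<in> PL (N1 \<times> N2) (prod_fan S1 S2)" by simp
  have c00: "?c 0 = 0" by (rule PL_at_0[OF F2 c2])
  have "?g z = ?c (snd z)"
  proof (rule PL_det[OF LP FP courant_prop(1)[OF UP rP] g0' _ z(2,1)])
    fix \<rho> assume \<rho>: "\<rho> \<in> rays (prod_fan S1 S2)"
    then consider \<rho>1 where "\<rho>1 \<in> rays S1" "\<rho> = \<rho>1 \<times> {0}" | \<rho>2' where "\<rho>2' \<in> rays S2" "\<rho> = {0} \<times> \<rho>2'"
      unfolding rays_prod[OF F1 F2] by blast
    then show "?g (prim_gen (N1 \<times> N2) \<rho>) = ?c (snd (prim_gen (N1 \<times> N2) \<rho>))"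
    proof cases
      case 2
      have pg: "prim_gen (N1 \<times> N2) \<rho> = (0, prim_gen N2 \<rho>2')" using prim_gen_prod2[OF L2 F2 2(1) z1] 2(2) by simp
      show ?thesis
      proof (cases "\<rho>2' = \<rho>2")
        case True
        then show ?thesis using courant_prop(2)[OF UP rP] courant_prop(2)[OF U2 r] 2(2) pg by simp
      next
        case False
        then have "\<rho> \<noteq> {0} \<times> \<rho>2" using 2(2) by (auto simp: times_eq_iff)
        then show ?thesis using courant_prop(3)[OF UP rP \<rho>] courant_prop(3)[OF U2 r 2(1) False] pg by simp
      qed
    next
      case 1
      have pg: "prim_gen (N1 \<times> N2) \<rho> = (prim_gen N1 \<rho>1, 0)" using prim_gen_prod1[OF L1 F1 1(1) z2] 1(2) by simp
      have "(0, prim_gen N2 \<rho>2) \<in> {0} \<times> \<rho>2" using ray_pg(1)[OF L2 F2 r] by simp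
      moreover have "(0, prim_gen N2 \<rho>2) \<notin> \<rho>1 \<times> {0}" using ray_pg(3)[OF L2 F2 r] by simp
      ultimately have "\<rho> \<noteq> {0} \<times> \<rho>2" using 1(2) by blast
      then show ?thesis using courant_prop(3)[OF UP rP \<rho>] pg c00 by simp
    qed
  qed
  then show ?thesis .
qed

definition chiP :: "(('a::euclidean_space \<Rightarrow> real) \<Rightarrow> int) \<Rightarrow> (('b::euclidean_space \<Rightarrow> real) \<Rightarrow> int) \<Rightarrow> ('a \<times> 'b \<Rightarrow> real) \<Rightarrow> int" where
  "chiP c1 c2 f = c1 (\<lambda>x. f (x, 0)) * c2 (\<lambda>y. f (0, y))"

lemma ehr_unimod: "ehr_chi N S c \<Longrightarrow> unimodular_fan N S"
  by (cases rule: ehr_chi.cases) auto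

lemma ehr_one: "ehr_chi N S c \<Longrightarrow> c (\<lambda>x. 0) = 1"
  by (cases rule: ehr_chi.cases) auto

lemma ehr_inv:
  assumes "ehr_chi N S c" "f \<in> PL N S" "g \<in> PL N S" "m \<in> intlin N" "\<forall>x\<in>\<Union>S. f x = g x + m x"
  shows "c f = c g"
proof -
  have "\<forall>f\<in>PL N S. \<forall>g\<in>PL N S. (\<exists>m\<in>intlin N. \<forall>x\<in>\<Union>S. f x = g x + m x) \<longrightarrow> c f = c g"
    using assms(1) by (cases rule: ehr_chi.cases) auto
  then show ?thesis using assms(2-5) by blast
qed

lemma zero_star_lattice: "is_lattice N \<Longrightarrow> (0::'a::euclidean_space) \<in> star_lattice N \<rho>"
  unfolding star_lattice_def using lattice_0 perp_proj_0 by (metis image_eqI)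

lemma zero_star_fan:
  fixes S :: "'a::euclidean_space set set"
  assumes F: "is_fan N S" and r: "\<rho> \<in> rays S"
  shows "perp_proj \<rho> ` \<rho> \<in> star_fan S \<rho>" "0 \<in> perp_proj \<rho> ` \<rho>"
proof -
  have \<rho>S: "\<rho> \<in> S" using raysD(1)[OF r] .
  have z: "0 \<in> \<rho>" using fan_0[OF F \<rho>S] .
  have "\<rho> face_of \<rho>" using face_of_refl[OF cone_convex[OF fan_cone[OF F \<rho>S]]] .
  then show "perp_proj \<rho> ` \<rho> \<in> star_fan S \<rho>" unfolding star_fan_def using \<rho>S z by blast
  show "0 \<in> perp_proj \<rho> ` \<rho>" using z perp_proj_0[of \<rho>] by (metis image_eqI)
qed

lemma main_step:
  fixes N1 :: "'a::euclidean_space set" and N2 :: "'b::euclidean_space set"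
  assumes E1: "ehr_chi N1 S1 c1" and E2: "ehr_chi N2 S2 c2"
    and H1: "\<forall>\<rho>1\<in>rays S1. \<exists>chir1. ehr_chi (star_lattice N1 \<rho>1) (star_fan S1 \<rho>1) chir1 \<and>
      ehr_chi (star_lattice N1 \<rho>1 \<times> N2) (prod_fan (star_fan S1 \<rho>1) S2) (chiP chir1 c2) \<and>
      (\<forall>f\<in>PL N1 S1. c1 f = c1 (\<lambda>x. f x - courant N1 S1 \<rho>1 x) + chir1 (star_fun N1 S1 \<rho>1 f))"
    and H2: "\<forall>\<rho>2\<in>rays S2. \<exists>chir2. ehr_chi (star_lattice N2 \<rho>2) (star_fan S2 \<rho>2) chir2 \<and>
      ehr_chi (N1 \<times> star_lattice N2 \<rho>2) (prod_fan S1 (star_fan S2 \<rho>2)) (chiP c1 chir2) \<and>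
      (\<forall>f\<in>PL N2 S2. c2 f = c2 (\<lambda>y. f y - courant N2 S2 \<rho>2 y) + chir2 (star_fun N2 S2 \<rho>2 f))"
  shows "ehr_chi (N1 \<times> N2) (prod_fan S1 S2) (chiP c1 c2)"
proof -
  have U1: "unimodular_fan N1 S1" by (rule ehr_unimod[OF E1])
  have U2: "unimodular_fan N2 S2" by (rule ehr_unimod[OF E2])
  have L1: "is_lattice N1" and F1: "is_fan N1 S1" using unimodD[OF U1] by auto
  have L2: "is_lattice N2" and F2: "is_fan N2 S2" using unimodD[OF U2] by auto
  have z1: "0 \<in> N1" and z2: "0 \<in> N2" using lattice_0 L1 L2 by auto
  have UP: "unimodular_fan (N1 \<times> N2) (prod_fan S1 S2)" by (rule unimod_prod[OF U1 U2])
  have LP: "is_lattice (N1 \<times> N2)" and FP: "is_fan (N1 \<times> N2) (prod_fan S1 S2)" using unimodD[OF UP] by auto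
  have Z1: "{0} \<in> S1" using zero_in_fan[OF F1] .
  have Z2: "{0} \<in> S2" using zero_in_fan[OF F2] .
  have res1: "(\<lambda>x. f (x, 0)) \<in> PL N1 S1" if "f \<in> PL (N1 \<times> N2) (prod_fan S1 S2)" for f
    using PL_res1[OF that z2 Z2] by simp
  have res2: "(\<lambda>y. f (0, y)) \<in> PL N2 S2" if "f \<in> PL (N1 \<times> N2) (prod_fan S1 S2)" for f
    using PL_res2[OF that z1 Z1] by simp
  have inP1: "(x, 0) \<in> \<sigma>1 \<times> {0}" "\<sigma>1 \<times> {0} \<in> prod_fan S1 S2" if "x \<in> \<sigma>1" "\<sigma>1 \<in> S1" for x \<sigma>1
    using that Z2 prod_fanI by auto
  have inP2: "(0, y) \<in> {0} \<times> \<sigma>2" "{0} \<times> \<sigma>2 \<in> prod_fan S1 S2" if "y \<in> \<sigma>2" "\<sigma>2 \<in> S2" for y \<sigma>2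
    using that Z1 prod_fanI by auto
  show ?thesis
  proof (rule ehr_chi.intros)
    show "unimodular_fan (N1 \<times> N2) (prod_fan S1 S2)" by (rule UP)
    show "\<forall>f\<in>PL (N1 \<times> N2) (prod_fan S1 S2). \<forall>g\<in>PL (N1 \<times> N2) (prod_fan S1 S2).
       (\<exists>m\<in>intlin (N1 \<times> N2). \<forall>x\<in>\<Union>(prod_fan S1 S2). f x = g x + m x) \<longrightarrow> chiP c1 c2 f = chiP c1 c2 g"
    proof (intro ballI impI)
      fix f g assume f: "f \<in> PL (N1 \<times> N2) (prod_fan S1 S2)" and g: "g \<in> PL (N1 \<times> N2) (prod_fan S1 S2)"
        and "\<exists>m\<in>intlin (N1 \<times> N2). \<forall>x\<in>\<Union>(prod_fan S1 S2). f x = g x + m x"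
      then obtain m where m: "m \<in> intlin (N1 \<times> N2)" "\<forall>x\<in>\<Union>(prod_fan S1 S2). f x = g x + m x" by blast
      have a: "c1 (\<lambda>x. f (x, 0)) = c1 (\<lambda>x. g (x, 0))"
      proof (rule ehr_inv[OF E1 res1[OF f] res1[OF g] intlin_res1[OF m(1) z2]])
        show "\<forall>x\<in>\<Union>S1. f (x, 0) = g (x, 0) + m (x, 0)"
        proof
          fix x assume "x \<in> \<Union>S1"
          then obtain \<sigma>1 where "x \<in> \<sigma>1" "\<sigma>1 \<in> S1" by blast
          then show "f (x, 0) = g (x, 0) + m (x, 0)" using m(2) inP1 by blast
        qed
      qed
      have b: "c2 (\<lambda>y. f (0, y)) = c2 (\<lambda>y. g (0, y))"
      proof (rule ehr_inv[OF E2 res2[OF f] res2[OF g] intlin_res2[OF m(1) z1]])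
        show "\<forall>y\<in>\<Union>S2. f (0, y) = g (0, y) + m (0, y)"
        proof
          fix y assume "y \<in> \<Union>S2"
          then obtain \<sigma>2 where "y \<in> \<sigma>2" "\<sigma>2 \<in> S2" by blast
          then show "f (0, y) = g (0, y) + m (0, y)" using m(2) inP2 by blast
        qed
      qed
      show "chiP c1 c2 f = chiP c1 c2 g" unfolding chiP_def using a b by simp
    qed
    show "chiP c1 c2 (\<lambda>x. 0) = 1" unfolding chiP_def using ehr_one[OF E1] ehr_one[OF E2] by simp
    show "\<forall>\<rho>\<in>rays (prod_fan S1 S2). \<exists>chir.
        ehr_chi (star_lattice (N1 \<times> N2) \<rho>) (star_fan (prod_fan S1 S2) \<rho>) chir \<and>
        (\<forall>f\<in>PL (N1 \<times> N2) (prod_fan S1 S2). chiP c1 c2 f =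
           chiP c1 c2 (\<lambda>x. f x - courant (N1 \<times> N2) (prod_fan S1 S2) \<rho> x) +
           chir (star_fun (N1 \<times> N2) (prod_fan S1 S2) \<rho> f))"
    proof
      fix \<rho> assume \<rho>: "\<rho> \<in> rays (prod_fan S1 S2)"
      have \<rho>P: "\<rho> \<in> prod_fan S1 S2" using raysD(1)[OF \<rho>] .
      from \<rho> consider (A) \<rho>1 where "\<rho>1 \<in> rays S1" "\<rho> = \<rho>1 \<times> {0}" | (B) \<rho>2 where "\<rho>2 \<in> rays S2" "\<rho> = {0} \<times> \<rho>2"
        unfolding rays_prod[OF F1 F2] by blast
      then show "\<exists>chir.
        ehr_chi (star_lattice (N1 \<times> N2) \<rho>) (star_fan (prod_fan S1 S2) \<rho>) chir \<and>
        (\<forall>f\<in>PL (N1 \<times> N2) (prod_fan S1 S2). chiP c1 c2 f =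
           chiP c1 c2 (\<lambda>x. f x - courant (N1 \<times> N2) (prod_fan S1 S2) \<rho> x) +
           chir (star_fun (N1 \<times> N2) (prod_fan S1 S2) \<rho> f))"
      proof cases
        case A
        obtain chir1 where ch: "ehr_chi (star_lattice N1 \<rho>1) (star_fan S1 \<rho>1) chir1"
          "ehr_chi (star_lattice N1 \<rho>1 \<times> N2) (prod_fan (star_fan S1 \<rho>1) S2) (chiP chir1 c2)"
          "\<forall>f\<in>PL N1 S1. c1 f = c1 (\<lambda>x. f x - courant N1 S1 \<rho>1 x) + chir1 (star_fun N1 S1 \<rho>1 f)"
          using H1 A(1) by blast
        have stl: "star_lattice (N1 \<times> N2) \<rho> = star_lattice N1 \<rho>1 \<times> N2" using A(2) star_lattice_Times1 by simp
        have stf: "star_fan (prod_fan S1 S2) \<rho> = prod_fan (star_fan S1 \<rho>1) S2"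
          using A(2) star_fan_Times1[OF F1 F2 A(1)] by simp
        have rec: "chiP c1 c2 f = chiP c1 c2 (\<lambda>x. f x - courant (N1 \<times> N2) (prod_fan S1 S2) \<rho> x) +
           chiP chir1 c2 (star_fun (N1 \<times> N2) (prod_fan S1 S2) \<rho> f)"
          if f: "f \<in> PL (N1 \<times> N2) (prod_fan S1 S2)" for f
        proof -
          define f1 where "f1 = (\<lambda>x. f (x, 0))"
          define f2 where "f2 = (\<lambda>y. f (0, y))"
          have f1P: "f1 \<in> PL N1 S1" unfolding f1_def by (rule res1[OF f])
          have f2P: "f2 \<in> PL N2 S2" unfolding f2_def by (rule res2[OF f])
          define g where "g = courant (N1 \<times> N2) (prod_fan S1 S2) \<rho>"
          define c where "c = courant N1 S1 \<rho>1"
          have gP: "g \<in> PL (N1 \<times> N2) (prod_fan S1 S2)" unfolding g_def by (rule courant_prop(1)[OF UP \<rho>])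
          have cP: "c \<in> PL N1 S1" unfolding c_def by (rule courant_prop(1)[OF U1 A(1)])
          have gval: "g z = c (fst z)" if "z \<in> \<sigma>" "\<sigma> \<in> prod_fan S1 S2" for z \<sigma>
            unfolding g_def c_def A(2) by (rule courant_prod1[OF U1 U2 A(1) that])
          have c0: "c 0 = 0" by (rule PL_at_0[OF F1 cP])
          have ea: "c1 (\<lambda>x. f (x, 0) - g (x, 0)) = c1 (\<lambda>x. f1 x - c x)"
          proof (rule ehr_inv[OF E1 _ PL_diff[OF f1P cP] intlin_0])
            show "(\<lambda>x. f (x, 0) - g (x, 0)) \<in> PL N1 S1" using res1[OF PL_diff[OF f gP]] by simp
            show "\<forall>x\<in>\<Union>S1. f (x, 0) - g (x, 0) = f1 x - c x + 0"
            proof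
              fix x assume "x \<in> \<Union>S1"
              then obtain \<sigma>1 where "x \<in> \<sigma>1" "\<sigma>1 \<in> S1" by blast
              then have "g (x, 0) = c x" using gval[OF inP1] by simp
              then show "f (x, 0) - g (x, 0) = f1 x - c x + 0" unfolding f1_def by simp
            qed
          qed
          have eb: "c2 (\<lambda>y. f (0, y) - g (0, y)) = c2 f2"
          proof (rule ehr_inv[OF E2 _ f2P intlin_0])
            show "(\<lambda>y. f (0, y) - g (0, y)) \<in> PL N2 S2" using res2[OF PL_diff[OF f gP]] by simp
            show "\<forall>y\<in>\<Union>S2. f (0, y) - g (0, y) = f2 y + 0"
            proof
              fix y assume "y \<in> \<Union>S2"
              then obtain \<sigma>2 where "y \<in> \<sigma>2" "\<sigma>2 \<in> S2" by blast
              then have "g (0, y) = c 0" using gval[OF inP2] by simp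
              then show "f (0, y) - g (0, y) = f2 y + 0" unfolding f2_def using c0 by simp
            qed
          qed
          define sf where "sf = star_fun (N1 \<times> N2) (prod_fan S1 S2) \<rho> f"
          define sf1 where "sf1 = star_fun N1 S1 \<rho>1 f1"
          have sfP: "sf \<in> PL (star_lattice N1 \<rho>1 \<times> N2) (prod_fan (star_fan S1 \<rho>1) S2)"
            unfolding sf_def using star_fun_PL[OF LP FP \<rho> f] stl stf by simp
          have z1': "0 \<in> star_lattice N1 \<rho>1" by (rule zero_star_lattice[OF L1])
          have sfa: "(\<lambda>x. sf (x, 0)) \<in> PL (star_lattice N1 \<rho>1) (star_fan S1 \<rho>1)"
            using PL_res1[OF sfP z2 Z2] by simp
          have sfb: "(\<lambda>y. sf (0, y)) \<in> PL N2 S2"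
            using PL_res2[OF sfP z1' zero_star_fan[OF F1 A(1)]] by simp
          have sf1P: "sf1 \<in> PL (star_lattice N1 \<rho>1) (star_fan S1 \<rho>1)"
            unfolding sf1_def by (rule star_fun_PL[OF L1 F1 A(1) f1P])
          define mP where "mP = sm0 (N1 \<times> N2) \<rho> f"
          define m1 where "m1 = sm0 N1 \<rho>1 f1"
          have mPi: "mP \<in> intlin (N1 \<times> N2)" unfolding mP_def by (rule sm0_prop(1)[OF f \<rho>P])
          have mPv: "f z = mP z" if "z \<in> \<rho>" for z unfolding mP_def by (rule sm0_prop(2)[OF f \<rho>P that])
          have \<rho>1S: "\<rho>1 \<in> S1" using raysD(1)[OF A(1)] .
          have m1i: "m1 \<in> intlin N1" unfolding m1_def by (rule sm0_prop(1)[OF f1P \<rho>1S])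
          have m1v: "f1 x = m1 x" if "x \<in> \<rho>1" for x unfolding m1_def by (rule sm0_prop(2)[OF f1P \<rho>1S that])
          define h where "h x = m1 x - mP (x, 0)" for x
          have hN1: "h \<in> intlin N1" unfolding h_def using intlin_diff[OF m1i intlin_res1[OF mPi z2]] .
          have hvan: "h a = 0" if "a \<in> \<rho>1" for a
          proof -
            have "(a, 0) \<in> \<rho>" using that A(2) by simp
            then show ?thesis unfolding h_def using m1v[OF that] mPv[of "(a, 0)"] unfolding f1_def by simp
          qed
          have hp: "h (perp_proj \<rho>1 x) = h x" for x by (rule linear_vanish_proj[OF intlinD(1)[OF hN1] hvan])
          have hint: "h \<in> intlin (star_lattice N1 \<rho>1)" unfolding intlin_def
          proof (intro CollectI conjI ballI)
            show "linear h" by (rule intlinD(1)[OF hN1])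
            fix y assume "y \<in> star_lattice N1 \<rho>1"
            then obtain n where n: "n \<in> N1" "y = perp_proj \<rho>1 n" unfolding star_lattice_def by blast
            show "h y \<in> \<int>" using hp intlinD(2)[OF hN1 n(1)] n(2) by simp
          qed
          have ec: "chir1 (\<lambda>x. sf (x, 0)) = chir1 sf1"
          proof (rule ehr_inv[OF ch(1) sfa sf1P hint])
            show "\<forall>y\<in>\<Union>(star_fan S1 \<rho>1). sf (y, 0) = sf1 y + h y"
            proof
              fix y assume "y \<in> \<Union>(star_fan S1 \<rho>1)"
              then obtain C where "y \<in> C" "C \<in> star_fan S1 \<rho>1" by blast
              then obtain \<tau> \<tau>' where C: "y \<in> perp_proj \<rho>1 ` \<tau>" "\<tau>' \<in> S1" "\<rho>1 \<subseteq> \<tau>'" "\<tau> face_of \<tau>'"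
                unfolding star_fan_def by blast
              then obtain x where x: "x \<in> \<tau>" "y = perp_proj \<rho>1 x" by blast
              have x': "x \<in> \<tau>'" using face_of_imp_subset[OF C(4)] x(1) by blast
              have v1: "sf1 y = f1 x - m1 x" unfolding sf1_def x(2) m1_def
                by (rule star_fun_val[OF L1 F1 A(1) f1P C(2,3) x'])
              have tP: "\<tau>' \<times> {0} \<in> prod_fan S1 S2" using C(2) Z2 by (rule prod_fanI)
              have rt: "\<rho> \<subseteq> \<tau>' \<times> {0}" using C(3) A(2) by auto
              have xt: "(x, 0) \<in> \<tau>' \<times> {0}" using x' by simp
              have pp: "perp_proj \<rho> (x, 0) = (y, 0)" unfolding A(2) perp_proj_Times1 using x(2) by simp
              have v2: "sf (y, 0) = f (x, 0) - mP (x, 0)" unfolding sf_def mP_def pp[symmetric]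
                by (rule star_fun_val[OF LP FP \<rho> f tP rt xt])
              have "h y = m1 x - mP (x, 0)" using hp x(2) unfolding h_def by metis
              then show "sf (y, 0) = sf1 y + h y" using v1 v2 unfolding f1_def by simp
            qed
          qed
          have ed: "c2 (\<lambda>y. sf (0, y)) = c2 f2"
          proof (rule ehr_inv[OF E2 sfb f2P intlin_neg[OF intlin_res2[OF mPi z1]]])
            show "\<forall>y\<in>\<Union>S2. sf (0, y) = f2 y + - mP (0, y)"
            proof
              fix y assume "y \<in> \<Union>S2"
              then obtain \<sigma>2 where s2: "y \<in> \<sigma>2" "\<sigma>2 \<in> S2" by blast
              have tP: "\<rho>1 \<times> \<sigma>2 \<in> prod_fan S1 S2" using \<rho>1S s2(2) by (rule prod_fanI)
              have rt: "\<rho> \<subseteq> \<rho>1 \<times> \<sigma>2" using A(2) fan_0[OF F2 s2(2)] by auto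
              have xt: "(0, y) \<in> \<rho>1 \<times> \<sigma>2" using s2(1) fan_0[OF F1 \<rho>1S] by simp
              have pp: "perp_proj \<rho> (0, y) = (0, y)" unfolding A(2) perp_proj_Times1 by (simp add: perp_proj_0)
              have "sf (0, y) = f (0, y) - mP (0, y)" unfolding sf_def mP_def
                using star_fun_val[OF LP FP \<rho> f tP rt xt] pp by simp
              then show "sf (0, y) = f2 y + - mP (0, y)" unfolding f2_def by simp
            qed
          qed
          have ee: "c1 f1 = c1 (\<lambda>x. f1 x - c x) + chir1 sf1" unfolding c_def sf1_def using ch(3) f1P by blast
          have "chiP c1 c2 f = c1 f1 * c2 f2" unfolding chiP_def f1_def f2_def ..
          also have "\<dots> = c1 (\<lambda>x. f1 x - c x) * c2 f2 + chir1 sf1 * c2 f2" using ee by (simp add: distrib_right)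
          also have "c1 (\<lambda>x. f1 x - c x) * c2 f2 = chiP c1 c2 (\<lambda>x. f x - g x)"
            unfolding chiP_def using ea eb by simp
          also have "chir1 sf1 * c2 f2 = chiP chir1 c2 sf" unfolding chiP_def using ec ed by simp
          finally show ?thesis unfolding g_def sf_def .
        qed
        show ?thesis
        proof (intro exI[of _ "chiP chir1 c2"] conjI ballI)
          show "ehr_chi (star_lattice (N1 \<times> N2) \<rho>) (star_fan (prod_fan S1 S2) \<rho>) (chiP chir1 c2)"
            unfolding stl stf by (rule ch(2))
        qed (rule rec)
      next
        case B
        obtain chir2 where ch: "ehr_chi (star_lattice N2 \<rho>2) (star_fan S2 \<rho>2) chir2"
          "ehr_chi (N1 \<times> star_lattice N2 \<rho>2) (prod_fan S1 (star_fan S2 \<rho>2)) (chiP c1 chir2)"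
          "\<forall>f\<in>PL N2 S2. c2 f = c2 (\<lambda>y. f y - courant N2 S2 \<rho>2 y) + chir2 (star_fun N2 S2 \<rho>2 f)"
          using H2 B(1) by blast
        have stl: "star_lattice (N1 \<times> N2) \<rho> = N1 \<times> star_lattice N2 \<rho>2" using B(2) star_lattice_Times2 by simp
        have stf: "star_fan (prod_fan S1 S2) \<rho> = prod_fan S1 (star_fan S2 \<rho>2)"
          using B(2) star_fan_Times2[OF F1 F2 B(1)] by simp
        have rec: "chiP c1 c2 f = chiP c1 c2 (\<lambda>x. f x - courant (N1 \<times> N2) (prod_fan S1 S2) \<rho> x) +
           chiP c1 chir2 (star_fun (N1 \<times> N2) (prod_fan S1 S2) \<rho> f)"
          if f: "f \<in> PL (N1 \<times> N2) (prod_fan S1 S2)" for f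
        proof -
          define f1 where "f1 = (\<lambda>x. f (x, 0))"
          define f2 where "f2 = (\<lambda>y. f (0, y))"
          have f1P: "f1 \<in> PL N1 S1" unfolding f1_def by (rule res1[OF f])
          have f2P: "f2 \<in> PL N2 S2" unfolding f2_def by (rule res2[OF f])
          define g where "g = courant (N1 \<times> N2) (prod_fan S1 S2) \<rho>"
          define c where "c = courant N2 S2 \<rho>2"
          have gP: "g \<in> PL (N1 \<times> N2) (prod_fan S1 S2)" unfolding g_def by (rule courant_prop(1)[OF UP \<rho>])
          have cP: "c \<in> PL N2 S2" unfolding c_def by (rule courant_prop(1)[OF U2 B(1)])
          have gval: "g z = c (snd z)" if "z \<in> \<sigma>" "\<sigma> \<in> prod_fan S1 S2" for z \<sigma>
            unfolding g_def c_def B(2) by (rule courant_prod2[OF U1 U2 B(1) that])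
          have c0: "c 0 = 0" by (rule PL_at_0[OF F2 cP])
          have ea: "c2 (\<lambda>y. f (0, y) - g (0, y)) = c2 (\<lambda>y. f2 y - c y)"
          proof (rule ehr_inv[OF E2 _ PL_diff[OF f2P cP] intlin_0])
            show "(\<lambda>y. f (0, y) - g (0, y)) \<in> PL N2 S2" using res2[OF PL_diff[OF f gP]] by simp
            show "\<forall>y\<in>\<Union>S2. f (0, y) - g (0, y) = f2 y - c y + 0"
            proof
              fix y assume "y \<in> \<Union>S2"
              then obtain \<sigma>2 where "y \<in> \<sigma>2" "\<sigma>2 \<in> S2" by blast
              then have "g (0, y) = c y" using gval[OF inP2] by simp
              then show "f (0, y) - g (0, y) = f2 y - c y + 0" unfolding f2_def by simp
            qed
          qed
          have eb: "c1 (\<lambda>x. f (x, 0) - g (x, 0)) = c1 f1"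
          proof (rule ehr_inv[OF E1 _ f1P intlin_0])
            show "(\<lambda>x. f (x, 0) - g (x, 0)) \<in> PL N1 S1" using res1[OF PL_diff[OF f gP]] by simp
            show "\<forall>x\<in>\<Union>S1. f (x, 0) - g (x, 0) = f1 x + 0"
            proof
              fix x assume "x \<in> \<Union>S1"
              then obtain \<sigma>1 where "x \<in> \<sigma>1" "\<sigma>1 \<in> S1" by blast
              then have "g (x, 0) = c 0" using gval[OF inP1] by simp
              then show "f (x, 0) - g (x, 0) = f1 x + 0" unfolding f1_def using c0 by simp
            qed
          qed
          define sf where "sf = star_fun (N1 \<times> N2) (prod_fan S1 S2) \<rho> f"
          define sf2 where "sf2 = star_fun N2 S2 \<rho>2 f2"
          have sfP: "sf \<in> PL (N1 \<times> star_lattice N2 \<rho>2) (prod_fan S1 (star_fan S2 \<rho>2))"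
            unfolding sf_def using star_fun_PL[OF LP FP \<rho> f] stl stf by simp
          have z2': "0 \<in> star_lattice N2 \<rho>2" by (rule zero_star_lattice[OF L2])
          have sfa: "(\<lambda>y. sf (0, y)) \<in> PL (star_lattice N2 \<rho>2) (star_fan S2 \<rho>2)"
            using PL_res2[OF sfP z1 Z1] by simp
          have sfb: "(\<lambda>x. sf (x, 0)) \<in> PL N1 S1"
            using PL_res1[OF sfP z2' zero_star_fan[OF F2 B(1)]] by simp
          have sf2P: "sf2 \<in> PL (star_lattice N2 \<rho>2) (star_fan S2 \<rho>2)"
            unfolding sf2_def by (rule star_fun_PL[OF L2 F2 B(1) f2P])
          define mP where "mP = sm0 (N1 \<times> N2) \<rho> f"
          define m2 where "m2 = sm0 N2 \<rho>2 f2"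
          have mPi: "mP \<in> intlin (N1 \<times> N2)" unfolding mP_def by (rule sm0_prop(1)[OF f \<rho>P])
          have mPv: "f z = mP z" if "z \<in> \<rho>" for z unfolding mP_def by (rule sm0_prop(2)[OF f \<rho>P that])
          have \<rho>2S: "\<rho>2 \<in> S2" using raysD(1)[OF B(1)] .
          have m2i: "m2 \<in> intlin N2" unfolding m2_def by (rule sm0_prop(1)[OF f2P \<rho>2S])
          have m2v: "f2 x = m2 x" if "x \<in> \<rho>2" for x unfolding m2_def by (rule sm0_prop(2)[OF f2P \<rho>2S that])
          define h where "h y = m2 y - mP (0, y)" for y
          have hN2: "h \<in> intlin N2" unfolding h_def using intlin_diff[OF m2i intlin_res2[OF mPi z1]] .
          have hvan: "h a = 0" if "a \<in> \<rho>2" for a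
          proof -
            have "(0, a) \<in> \<rho>" using that B(2) by simp
            then show ?thesis unfolding h_def using m2v[OF that] mPv[of "(0, a)"] unfolding f2_def by simp
          qed
          have hp: "h (perp_proj \<rho>2 x) = h x" for x by (rule linear_vanish_proj[OF intlinD(1)[OF hN2] hvan])
          have hint: "h \<in> intlin (star_lattice N2 \<rho>2)" unfolding intlin_def
          proof (intro CollectI conjI ballI)
            show "linear h" by (rule intlinD(1)[OF hN2])
            fix y assume "y \<in> star_lattice N2 \<rho>2"
            then obtain n where n: "n \<in> N2" "y = perp_proj \<rho>2 n" unfolding star_lattice_def by blast
            show "h y \<in> \<int>" using hp intlinD(2)[OF hN2 n(1)] n(2) by simp
          qed
          have ec: "chir2 (\<lambda>y. sf (0, y)) = chir2 sf2"
          proof (rule ehr_inv[OF ch(1) sfa sf2P hint])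
            show "\<forall>y\<in>\<Union>(star_fan S2 \<rho>2). sf (0, y) = sf2 y + h y"
            proof
              fix y assume "y \<in> \<Union>(star_fan S2 \<rho>2)"
              then obtain C where "y \<in> C" "C \<in> star_fan S2 \<rho>2" by blast
              then obtain \<tau> \<tau>' where C: "y \<in> perp_proj \<rho>2 ` \<tau>" "\<tau>' \<in> S2" "\<rho>2 \<subseteq> \<tau>'" "\<tau> face_of \<tau>'"
                unfolding star_fan_def by blast
              then obtain x where x: "x \<in> \<tau>" "y = perp_proj \<rho>2 x" by blast
              have x': "x \<in> \<tau>'" using face_of_imp_subset[OF C(4)] x(1) by blast
              have v1: "sf2 y = f2 x - m2 x" unfolding sf2_def x(2) m2_def
                by (rule star_fun_val[OF L2 F2 B(1) f2P C(2,3) x'])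
              have tP: "{0} \<times> \<tau>' \<in> prod_fan S1 S2" using Z1 C(2) by (rule prod_fanI)
              have rt: "\<rho> \<subseteq> {0} \<times> \<tau>'" using C(3) B(2) by auto
              have xt: "(0, x) \<in> {0} \<times> \<tau>'" using x' by simp
              have pp: "perp_proj \<rho> (0, x) = (0, y)" unfolding B(2) perp_proj_Times2 using x(2) by simp
              have v2: "sf (0, y) = f (0, x) - mP (0, x)" unfolding sf_def mP_def pp[symmetric]
                by (rule star_fun_val[OF LP FP \<rho> f tP rt xt])
              have "h y = m2 x - mP (0, x)" using hp x(2) unfolding h_def by metis
              then show "sf (0, y) = sf2 y + h y" using v1 v2 unfolding f2_def by simp
            qed
          qed
          have ed: "c1 (\<lambda>x. sf (x, 0)) = c1 f1"
          proof (rule ehr_inv[OF E1 sfb f1P intlin_neg[OF intlin_res1[OF mPi z2]]])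
            show "\<forall>x\<in>\<Union>S1. sf (x, 0) = f1 x + - mP (x, 0)"
            proof
              fix x assume "x \<in> \<Union>S1"
              then obtain \<sigma>1 where s1: "x \<in> \<sigma>1" "\<sigma>1 \<in> S1" by blast
              have tP: "\<sigma>1 \<times> \<rho>2 \<in> prod_fan S1 S2" using s1(2) \<rho>2S by (rule prod_fanI)
              have rt: "\<rho> \<subseteq> \<sigma>1 \<times> \<rho>2" using B(2) fan_0[OF F1 s1(2)] by auto
              have xt: "(x, 0) \<in> \<sigma>1 \<times> \<rho>2" using s1(1) fan_0[OF F2 \<rho>2S] by simp
              have pp: "perp_proj \<rho> (x, 0) = (x, 0)" unfolding B(2) perp_proj_Times2 by (simp add: perp_proj_0)
              have "sf (x, 0) = f (x, 0) - mP (x, 0)" unfolding sf_def mP_def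
                using star_fun_val[OF LP FP \<rho> f tP rt xt] pp by simp
              then show "sf (x, 0) = f1 x + - mP (x, 0)" unfolding f1_def by simp
            qed
          qed
          have ee: "c2 f2 = c2 (\<lambda>y. f2 y - c y) + chir2 sf2" unfolding c_def sf2_def using ch(3) f2P by blast
          have "chiP c1 c2 f = c1 f1 * c2 f2" unfolding chiP_def f1_def f2_def ..
          also have "\<dots> = c1 f1 * c2 (\<lambda>y. f2 y - c y) + c1 f1 * chir2 sf2" using ee by (simp add: distrib_left)
          also have "c1 f1 * c2 (\<lambda>y. f2 y - c y) = chiP c1 c2 (\<lambda>x. f x - g x)"
            unfolding chiP_def using ea eb by simp
          also have "c1 f1 * chir2 sf2 = chiP c1 chir2 sf" unfolding chiP_def using ec ed by simp
          finally show ?thesis unfolding g_def sf_def .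
        qed
        show ?thesis
        proof (intro exI[of _ "chiP c1 chir2"] conjI ballI)
          show "ehr_chi (star_lattice (N1 \<times> N2) \<rho>) (star_fan (prod_fan S1 S2) \<rho>) (chiP c1 chir2)"
            unfolding stl stf by (rule ch(2))
        qed (rule rec)
      qed
    qed
  qed
qed

lemma ehr_prod:
  fixes N1 :: "'a::euclidean_space set"
  assumes "ehr_chi N1 S1 c1"
  shows "\<forall>(N2::'b::euclidean_space set) S2 c2. ehr_chi N2 S2 c2 \<longrightarrow> ehr_chi (N1 \<times> N2) (prod_fan S1 S2) (chiP c1 c2)"
  using assms
proof (induction rule: ehr_chi.induct)
  case (1 N1 S1 c1)
  note outer = 1
  have E1: "ehr_chi N1 S1 c1"
  proof (rule ehr_chi.intros)
    show "unimodular_fan N1 S1" by (rule outer(1))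
    show "\<forall>f\<in>PL N1 S1. \<forall>g\<in>PL N1 S1. (\<exists>m\<in>intlin N1. \<forall>x\<in>\<Union> S1. f x = g x + m x) \<longrightarrow> c1 f = c1 g" by (rule outer(2))
    show "c1 (\<lambda>x. 0) = 1" by (rule outer(3))
    show "\<forall>\<rho>\<in>rays S1. \<exists>chir. ehr_chi (star_lattice N1 \<rho>) (star_fan S1 \<rho>) chir \<and>
      (\<forall>f\<in>PL N1 S1. c1 f = c1 (\<lambda>x. f x - courant N1 S1 \<rho> x) + chir (star_fun N1 S1 \<rho> f))"
      using outer(4) by blast
  qed
  show ?case
  proof (intro allI impI)
    fix N2 :: "'b set" and S2 c2 assume "ehr_chi N2 S2 c2"
    then show "ehr_chi (N1 \<times> N2) (prod_fan S1 S2) (chiP c1 c2)"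
    proof (induction rule: ehr_chi.induct)
      case (1 N2 S2 c2)
      note inner = 1
      have E2: "ehr_chi N2 S2 c2"
      proof (rule ehr_chi.intros)
        show "unimodular_fan N2 S2" by (rule inner(1))
        show "\<forall>f\<in>PL N2 S2. \<forall>g\<in>PL N2 S2. (\<exists>m\<in>intlin N2. \<forall>x\<in>\<Union> S2. f x = g x + m x) \<longrightarrow> c2 f = c2 g" by (rule inner(2))
        show "c2 (\<lambda>x. 0) = 1" by (rule inner(3))
        show "\<forall>\<rho>\<in>rays S2. \<exists>chir. ehr_chi (star_lattice N2 \<rho>) (star_fan S2 \<rho>) chir \<and>
          (\<forall>f\<in>PL N2 S2. c2 f = c2 (\<lambda>x. f x - courant N2 S2 \<rho> x) + chir (star_fun N2 S2 \<rho> f))"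
          using inner(4) by blast
      qed
      show ?case
      proof (rule main_step[OF E1 E2])
        show "\<forall>\<rho>1\<in>rays S1. \<exists>chir1. ehr_chi (star_lattice N1 \<rho>1) (star_fan S1 \<rho>1) chir1 \<and>
          ehr_chi (star_lattice N1 \<rho>1 \<times> N2) (prod_fan (star_fan S1 \<rho>1) S2) (chiP chir1 c2) \<and>
          (\<forall>f\<in>PL N1 S1. c1 f = c1 (\<lambda>x. f x - courant N1 S1 \<rho>1 x) + chir1 (star_fun N1 S1 \<rho>1 f))"
        proof
          fix \<rho>1 assume r: "\<rho>1 \<in> rays S1"
          obtain chir1 where ch: "ehr_chi (star_lattice N1 \<rho>1) (star_fan S1 \<rho>1) chir1"
            "\<forall>(N2::'b set) S2 c2. ehr_chi N2 S2 c2 \<longrightarrow>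
               ehr_chi (star_lattice N1 \<rho>1 \<times> N2) (prod_fan (star_fan S1 \<rho>1) S2) (chiP chir1 c2)"
            "\<forall>f\<in>PL N1 S1. c1 f = c1 (\<lambda>x. f x - courant N1 S1 \<rho>1 x) + chir1 (star_fun N1 S1 \<rho>1 f)"
            using outer(4) r by blast
          have "ehr_chi (star_lattice N1 \<rho>1 \<times> N2) (prod_fan (star_fan S1 \<rho>1) S2) (chiP chir1 c2)"
            using ch(2) E2 by blast
          then show "\<exists>chir1. ehr_chi (star_lattice N1 \<rho>1) (star_fan S1 \<rho>1) chir1 \<and>
            ehr_chi (star_lattice N1 \<rho>1 \<times> N2) (prod_fan (star_fan S1 \<rho>1) S2) (chiP chir1 c2) \<and>
            (\<forall>f\<in>PL N1 S1. c1 f = c1 (\<lambda>x. f x - courant N1 S1 \<rho>1 x) + chir1 (star_fun N1 S1 \<rho>1 f))"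
            using ch(1,3) by blast
        qed
        show "\<forall>\<rho>2\<in>rays S2. \<exists>chir2. ehr_chi (star_lattice N2 \<rho>2) (star_fan S2 \<rho>2) chir2 \<and>
          ehr_chi (N1 \<times> star_lattice N2 \<rho>2) (prod_fan S1 (star_fan S2 \<rho>2)) (chiP c1 chir2) \<and>
          (\<forall>f\<in>PL N2 S2. c2 f = c2 (\<lambda>y. f y - courant N2 S2 \<rho>2 y) + chir2 (star_fun N2 S2 \<rho>2 f))"
          using inner(4) by blast
      qed
    qed
  qed
qed

theorem proposition5:
  fixes N1 :: "'a::euclidean_space set" and S1 :: "'a set set"
    and N2 :: "'b::euclidean_space set" and S2 :: "'b set set"
    and chi1 :: "('a \<Rightarrow> real) \<Rightarrow> int" and chi2 :: "('b \<Rightarrow> real) \<Rightarrow> int"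
  assumes "ehr_chi N1 S1 chi1" and "ehr_chi N2 S2 chi2"
  shows "ehrhart (N1 \<times> N2) (prod_fan S1 S2) \<and>
    (\<forall>chi. ehr_chi (N1 \<times> N2) (prod_fan S1 S2) chi \<longrightarrow>
       (\<forall>f1\<in>PL N1 S1. \<forall>f2\<in>PL N2 S2. chi (\<lambda>(x, y). f1 x + f2 y) = chi1 f1 * chi2 f2))"
proof
  have EP: "ehr_chi (N1 \<times> N2) (prod_fan S1 S2) (chiP chi1 chi2)"
    using ehr_prod[OF assms(1)] assms(2) by blast
  then show "ehrhart (N1 \<times> N2) (prod_fan S1 S2)" unfolding ehrhart_def by blast
  have F1: "is_fan N1 S1" using unimodD(2)[OF ehr_unimod[OF assms(1)]] .
  have F2: "is_fan N2 S2" using unimodD(2)[OF ehr_unimod[OF assms(2)]] .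
  show "\<forall>chi. ehr_chi (N1 \<times> N2) (prod_fan S1 S2) chi \<longrightarrow>
       (\<forall>f1\<in>PL N1 S1. \<forall>f2\<in>PL N2 S2. chi (\<lambda>(x, y). f1 x + f2 y) = chi1 f1 * chi2 f2)"
  proof (intro allI impI ballI)
    fix chi f1 f2 assume E: "ehr_chi (N1 \<times> N2) (prod_fan S1 S2) chi"
      and f1: "f1 \<in> PL N1 S1" and f2: "f2 \<in> PL N2 S2"
    have e: "(\<lambda>(x, y). f1 x + f2 y) = (\<lambda>z. f1 (fst z) + f2 (snd z))" by (rule ext) (simp add: case_prod_beta)
    have fP: "(\<lambda>(x, y). f1 x + f2 y) \<in> PL (N1 \<times> N2) (prod_fan S1 S2)" unfolding e by (rule PL_prod[OF f1 f2])
    have "chi (\<lambda>(x, y). f1 x + f2 y) = chiP chi1 chi2 (\<lambda>(x, y). f1 x + f2 y)" by (rule ehr_unique[OF E EP fP])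
    also have "\<dots> = chi1 (\<lambda>x. f1 x + f2 0) * chi2 (\<lambda>y. f1 0 + f2 y)" unfolding chiP_def by simp
    also have "\<dots> = chi1 f1 * chi2 f2" using PL_at_0[OF F1 f1] PL_at_0[OF F2 f2] by simp
    finally show "chi (\<lambda>(x, y). f1 x + f2 y) = chi1 f1 * chi2 f2" .
  qed
qed

end
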